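(* Let $n\ge 2$ be an integer and $\Pi_1,\Pi_4>0$. Let $\mathbb{D}^2$ be the $n\times n$ circulant matrix with first row $(-2,1,0,\ldots,0,1)$, and let $A=\begin{bmatrix}0&I\\ \mathbb{D}^2&0\end{bmatrix}$, $B=\begin{bmatrix}0\\ I\end{bmatrix}$, $C=\begin{bmatrix}\Pi_4 I&0\end{bmatrix}$. Consider the (deterministic) Kalman filtering problem for $$\frac{d}{d\tau}\boldsymbol{\Psi}(\tau)=A\boldsymbol{\Psi}(\tau)+B\boldsymbol{\rho}(\tau),\qquad \boldsymbol{\gamma}(\tau)=C\boldsymbol{\Psi}(\tau)+\boldsymbol{\eta}(\tau),$$ with $\boldsymbol{\Psi}(\tau)\in\mathbb{R}^{2n}$, $\boldsymbol{\rho}(\tau),\boldsymbol{\eta}(\tau)\in\mathbb{R}^n$, and cost $\int_0^\infty \boldsymbol{\eta}^T\big(I-\Pi_1\mathbb{D}^2\big)\boldsymbol{\eta}+\boldsymbol{\rho}^T\boldsymbol{\rho}\,d\tau$. Then the optimal Kalman filter gain is $L=\begin{bmatrix}L_1\\ L_2\end{bmatrix}$ with circulant matrices $$L_1=F^{-1}\mathrm{diag}\Big(\sqrt{\tfrac{2}{\Pi_4}\hat{L}_0(\kappa)}\Big)F,\qquad L_2=F^{-1}\mathrm{diag}\big(\hat{L}_0(\kappa)\big)F,$$ where, for $\kappa\in\{0,\ldots,n-1\}$, $$\hat{L}_0(\kappa)=\frac{\hat{D}_{\kappa\kappa}}{\Pi_4}+\sqrt{\frac{\hat{D}_{\kappa\kappa}^2}{\Pi_4^2}-\Pi_1\hat{D}_{\kappa\kappa}+1},\qquad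 \hat{D}_{\kappa\kappa}=-4\sin^2\!\left(\frac{\pi\kappa}{n}\right).$$ Equivalently, $\hat{L}(\kappa)=\begin{bmatrix}\sqrt{\tfrac{2}{\Pi_4}\hat{L}_0(\kappa)}&\hat{L}_0(\kappa)\end{bmatrix}^T$.
   Context: $F$ denotes the $n\times n$ unitary discrete Fourier transform matrix, $F_{kj}=n^{-1/2}e^{-2\pi i kj/n}$, $k,j\in\{0,\ldots,n-1\}$; $\mathrm{diag}(f(\kappa))$ is the diagonal matrix with $\kappa$-th diagonal entry $f(\kappa)$. For the filtering problem with cost $\int\boldsymbol{\eta}^TW\boldsymbol{\eta}+\boldsymbol{\rho}^T\boldsymbol{\rho}$, the optimal Kalman filter gain is $L=SC^TW$, where $S$ is the symmetric positive definite (stabilizing) solution of $AS+SA^T+BB^T-SC^TWCS=0$, and the estimator is $\frac{d}{d\tau}\tilde{\boldsymbol{\Psi}}=(A-LC)\tilde{\boldsymbol{\Psi}}+L\boldsymbol{\gamma}$; here $W=I-\Pi_1\mathbb{D}^2$. Equivalently (stochastic formulation), $\boldsymbol{\rho},\boldsymbol{\eta}$ are uncorrelated zero-mean Gaussian white noises with covariances $I$ and $(I-\Pi_1\mathbb{D}^2)^{-1}$. *)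

theory Defs
  imports "Jordan_Normal_Form.Char_Poly" "Jordan_Normal_Form.Gauss_Jordan_Elimination"
begin

(* periodic second-difference matrix: circulant with first row (-2,1,0,...,0,1);
   for n = 2 the two off-diagonal contributions add up *)
definition D2 :: "nat \<Rightarrow> real mat" where
  "D2 n = mat n n (\<lambda>(i,j). (if j = (i + 1) mod n then 1 else 0)
                         + (if j = (i + n - 1) mod n then 1 else 0)
                         - (if i = j then 2 else 0))"

definition sysA :: "nat \<Rightarrow> real mat" where
  "sysA n = four_block_mat (0\<^sub>m n n) (1\<^sub>m n) (D2 n) (0\<^sub>m n n)"

definition sysB :: "nat \<Rightarrow> real mat" where
  "sysB n = (0\<^sub>m n n) @\<^sub>r (1\<^sub>m n)"

definition sysC :: "nat \<Rightarrow> real \<Rightarrow> real mat" where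
  "sysC n P4 = four_block_mat (P4 \<cdot>\<^sub>m 1\<^sub>m n) (0\<^sub>m n n) (0\<^sub>m 0 n) (0\<^sub>m 0 n)"

definition weightW :: "nat \<Rightarrow> real \<Rightarrow> real mat" where
  "weightW n P1 = 1\<^sub>m n - P1 \<cdot>\<^sub>m D2 n"

definition sym_pos_def_mat :: "nat \<Rightarrow> real mat \<Rightarrow> bool" where
  "sym_pos_def_mat N S \<longleftrightarrow> S \<in> carrier_mat N N \<and> transpose_mat S = S \<and>
     (\<forall>x \<in> carrier_vec N. x \<noteq> 0\<^sub>v N \<longrightarrow> x \<bullet> (S *\<^sub>v x) > 0)"

definition hurwitz :: "real mat \<Rightarrow> bool" where
  "hurwitz M \<longleftrightarrow> (\<forall>k. eigenvalue (map_mat complex_of_real M) k \<longrightarrow> Re k < 0)"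

definition stabilizing_riccati_sol ::
  "real mat \<Rightarrow> real mat \<Rightarrow> real mat \<Rightarrow> real mat \<Rightarrow> real mat \<Rightarrow> bool" where
  "stabilizing_riccati_sol A B C W S \<longleftrightarrow>
     sym_pos_def_mat (dim_row A) S \<and>
     A * S + S * transpose_mat A + B * transpose_mat B
       - S * transpose_mat C * W * C * S = 0\<^sub>m (dim_row A) (dim_row A) \<and>
     hurwitz (A - S * transpose_mat C * W * C)"

definition kalman_gain ::
  "real mat \<Rightarrow> real mat \<Rightarrow> real mat \<Rightarrow> real mat \<Rightarrow> real mat \<Rightarrow> bool" where
  "kalman_gain A B C W L \<longleftrightarrow>
     (\<exists>S. stabilizing_riccati_sol A B C W S \<and> L = S * transpose_mat C * W)"

definition dft_mat :: "nat \<Rightarrow> complex mat" where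
  "dft_mat n = mat n n (\<lambda>(k,j). exp (- 2 * pi * \<i> * of_nat (k * j) / of_nat n) / of_real (sqrt (real n)))"

definition Dhat :: "nat \<Rightarrow> nat \<Rightarrow> real" where
  "Dhat n \<kappa> = - 4 * (sin (pi * real \<kappa> / real n))^2"

definition L0hat :: "nat \<Rightarrow> real \<Rightarrow> real \<Rightarrow> nat \<Rightarrow> real" where
  "L0hat n P1 P4 \<kappa> = Dhat n \<kappa> / P4
      + sqrt ((Dhat n \<kappa>)^2 / P4^2 - P1 * Dhat n \<kappa> + 1)"

definition circ_of_symbol :: "nat \<Rightarrow> (nat \<Rightarrow> real) \<Rightarrow> complex mat" where
  "circ_of_symbol n f = the (mat_inverse (dft_mat n)) * mat_diag n (\<lambda>k. complex_of_real (f k)) * dft_mat n"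

end

theory Submission
  imports Defs "Jordan_Normal_Form.Schur_Decomposition"
begin
lemma cis_int_mult: "cis (2 * pi * real_of_int m) = 1"
  using cis_multiple_2pi[of "real_of_int m"] by simp

lemma cis_sum:
  assumes n: "n > 0"
  shows "(\<Sum>k<n. cis (2*pi*real_of_int m*real k/real n)) = (if int n dvd m then of_nat n else 0)"
proof -
  define z where "z = cis (2*pi*real_of_int m/real n)"
  have pw: "cis (2*pi*real_of_int m*real k/real n) = z^k" for k
    unfolding z_def DeMoivre by (simp add: field_simps)
  have zn: "z^n = 1" unfolding z_def DeMoivre using n
    by (simp add: cis_int_mult)
  show ?thesis
  proof (cases "int n dvd m")
    case True
    then obtain q where q: "m = int n * q" by (auto elim: dvdE)
    have "2*pi*real_of_int m/real n = 2*pi*real_of_int q" using n q by (simp add: field_simps)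
    hence "z = cis (2*pi*real_of_int q)" unfolding z_def by simp
    hence "z = 1" using cis_int_mult[of q] by (simp add: mult.assoc)
    thus ?thesis using True unfolding pw by simp
  next
    case False
    have "z \<noteq> 1"
    proof
      assume "z = 1"
      hence "cos (2*pi*real_of_int m/real n) = 1" unfolding z_def
        by (metis cis.sel(1) one_complex.sel(1))
      then obtain t :: int where t: "2*pi*real_of_int m/real n = real_of_int t*2*pi"
        unfolding cos_one_2pi_int by blast
      hence "real_of_int m = real_of_int t * real n" using n by (simp add: field_simps)
      hence "m = t * int n" by (metis of_int_eq_iff of_int_mult of_int_of_nat_eq)
      with False show False by simp
    qed
    thus ?thesis using False unfolding pw sum_gp_strict zn by simp
  qed
qed

lemma dft_entry:
  assumes "i < n" "j < n"
  shows "dft_mat n $$ (i,j) = cis (-2*pi*real (i*j)/real n) / complex_of_real (sqrt (real n))"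
proof -
  have "- 2 * pi * \<i> * of_nat (i * j) / of_nat n = \<i> * complex_of_real (-2*pi*real (i*j)/real n)"
    by (simp add: field_simps)
  have "dft_mat n $$ (i,j) = exp (- 2 * pi * \<i> * of_nat (i * j) / of_nat n) / of_real (sqrt (real n))"
    using assms unfolding dft_mat_def by simp
  also note \<open>- 2 * pi * \<i> * of_nat (i * j) / of_nat n = \<i> * complex_of_real (-2*pi*real (i*j)/real n)\<close>
  finally show ?thesis unfolding cis_conv_exp .
qed

lemma csqrt_sq[simp]: "(complex_of_real (sqrt (real n)))\<^sup>2 = of_nat n"
proof -
  have "(complex_of_real (sqrt (real n)))\<^sup>2 = complex_of_real ((sqrt (real n))\<^sup>2)"
    by (simp only: of_real_power)
  also have "\<dots> = of_nat n" by simp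
  finally show ?thesis .
qed

definition Vm :: "nat \<Rightarrow> complex mat" where
  "Vm n = mat n n (\<lambda>(i,j). cnj (dft_mat n $$ (j,i)))"

lemma Vm_entry:
  assumes "i < n" "j < n"
  shows "Vm n $$ (i,j) = cis (2*pi*real (i*j)/real n) / complex_of_real (sqrt (real n))"
  using assms unfolding Vm_def by (simp add: dft_entry cis_cnj mult.commute)

lemma dft_carrier[simp]: "dft_mat n \<in> carrier_mat n n" unfolding dft_mat_def by simp
lemma Vm_carrier[simp]: "Vm n \<in> carrier_mat n n" unfolding Vm_def by simp
lemma dft_dim[simp]: "dim_row (dft_mat n) = n" "dim_col (dft_mat n) = n" unfolding dft_mat_def by simp_all
lemma Vm_dim[simp]: "dim_row (Vm n) = n" "dim_col (Vm n) = n" unfolding Vm_def by simp_all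

lemma orth_sum:
  assumes n: "n > 0" and i: "i < n" and j: "j < n"
  shows "(\<Sum>k<n. cis (2*pi*real (i*k)/real n) * cis (-2*pi*real (k*j)/real n)) / of_nat n
     = (if i = j then 1 else 0)"
proof -
  have "(\<Sum>k<n. cis (2*pi*real (i*k)/real n) * cis (-2*pi*real (k*j)/real n))
      = (\<Sum>k<n. cis (2*pi*real_of_int (int i - int j)*real k/real n))"
    by (rule sum.cong, simp_all add: cis_mult field_simps)
  also have "\<dots> = (if int n dvd (int i - int j) then of_nat n else 0)" by (rule cis_sum[OF n])
  also have "(int n dvd (int i - int j)) = (i = j)"
  proof
    assume "int n dvd (int i - int j)"
    then obtain q where q: "int i - int j = int n * q" by (auto elim: dvdE)
    show "i = j"
    proof (cases "q = 0")
      case False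
      hence "1 \<le> \<bar>q\<bar>" by simp
      hence "\<bar>int n * q\<bar> \<ge> int n" using mult_left_mono[of 1 "\<bar>q\<bar>" "int n"] by (simp add: abs_mult)
      with q i j show ?thesis by linarith
    qed (use q in simp)
  qed simp
  finally show ?thesis using n by simp
qed

lemma UV: assumes n: "n > 0" shows "dft_mat n * Vm n = 1\<^sub>m n"
proof (rule eq_matI)
  fix i j assume i: "i < dim_row (1\<^sub>m n)" and j: "j < dim_col (1\<^sub>m n)"
  hence i: "i < n" and j: "j < n" by auto
  have "(dft_mat n * Vm n) $$ (i,j) = (\<Sum>k<n. dft_mat n $$ (i,k) * Vm n $$ (k,j))"
    using i j by (simp add: scalar_prod_def lessThan_atLeast0)
  also have "\<dots> = (\<Sum>k<n. cis (2*pi*real (j*k)/real n) * cis (-2*pi*real (k*i)/real n)) / of_nat n"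
    unfolding sum_divide_distrib
    by (rule sum.cong, insert n i j, auto simp: dft_entry Vm_entry field_simps
        power2_eq_square[symmetric])
  also have "\<dots> = 1\<^sub>m n $$ (i,j)" using orth_sum[OF n j i] i j by auto
  finally show "(dft_mat n * Vm n) $$ (i,j) = 1\<^sub>m n $$ (i,j)" .
qed auto

lemma VU: assumes n: "n > 0" shows "Vm n * dft_mat n = 1\<^sub>m n"
proof (rule eq_matI)
  fix i j assume i: "i < dim_row (1\<^sub>m n)" and j: "j < dim_col (1\<^sub>m n)"
  hence i: "i < n" and j: "j < n" by auto
  have "(Vm n * dft_mat n) $$ (i,j) = (\<Sum>k<n. Vm n $$ (i,k) * dft_mat n $$ (k,j))"
    using i j by (simp add: scalar_prod_def lessThan_atLeast0)
  also have "\<dots> = (\<Sum>k<n. cis (2*pi*real (i*k)/real n) * cis (-2*pi*real (k*j)/real n)) / of_nat n"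
    unfolding sum_divide_distrib
    by (rule sum.cong, insert n i j, auto simp: dft_entry Vm_entry field_simps
        power2_eq_square[symmetric])
  also have "\<dots> = 1\<^sub>m n $$ (i,j)" using orth_sum[OF n i j] i j by auto
  finally show "(Vm n * dft_mat n) $$ (i,j) = 1\<^sub>m n $$ (i,j)" .
qed auto

abbreviation cmap :: "real mat \<Rightarrow> complex mat" where "cmap \<equiv> map_mat complex_of_real"

lemma cmap_inj: "cmap A = cmap B \<Longrightarrow> A = B"
proof -
  assume eq: "cmap A = cmap B"
  have d: "dim_row A = dim_row B" "dim_col A = dim_col B"
    using arg_cong[OF eq, of dim_row] arg_cong[OF eq, of dim_col] by auto
  show "A = B"
  proof (rule eq_matI)
    fix i j assume "i < dim_row B" "j < dim_col B"
    with d have "cmap A $$ (i,j) = complex_of_real (A $$ (i,j))" "cmap B $$ (i,j) = complex_of_real (B $$ (i,j))"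
      by auto
    with eq show "A $$ (i,j) = B $$ (i,j)" by simp
  qed (use d in auto)
qed

lemma mat_diag_dims[simp]: "dim_row (mat_diag n f) = n" "dim_col (mat_diag n f) = n"
  unfolding mat_diag_def by auto

lemma mult_sq[simp]: "A \<in> carrier_mat n n \<Longrightarrow> B \<in> carrier_mat n n \<Longrightarrow> A * B \<in> carrier_mat n n"
  by auto

definition circ :: "nat \<Rightarrow> (nat \<Rightarrow> real) \<Rightarrow> complex mat" where
  "circ n f = Vm n * mat_diag n (\<lambda>k. complex_of_real (f k)) * dft_mat n"

lemma circ_carrier[simp]: "circ n f \<in> carrier_mat n n" unfolding circ_def by auto
lemma circ_dim[simp]: "dim_row (circ n f) = n" "dim_col (circ n f) = n"
  using circ_carrier[of n f] by (auto simp del: circ_carrier)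

lemma circ_mult: assumes n: "n > 0" shows "circ n f * circ n g = circ n (\<lambda>k. f k * g k)"
proof -
  let ?V = "Vm n" and ?U = "dft_mat n" and ?F = "mat_diag n (\<lambda>k. complex_of_real (f k))"
    and ?G = "mat_diag n (\<lambda>k. complex_of_real (g k))"
  have "circ n f * circ n g = ?V * (?F * ((?U * ?V) * (?G * ?U)))"
    unfolding circ_def by (simp add: assoc_mult_mat[of _ n n _ n _ n])
  also have "\<dots> = ?V * (?F * (?G * ?U))" unfolding UV[OF n] by simp
  also have "?F * (?G * ?U) = mat_diag n (\<lambda>k. complex_of_real (f k * g k)) * ?U"
    by (subst assoc_mult_mat[symmetric, of ?F n n ?G n ?U n]) auto
  also have "?V * \<dots> = circ n (\<lambda>k. f k * g k)"
    unfolding circ_def by (rule assoc_mult_mat[symmetric]) auto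
  finally show ?thesis .
qed

lemma circ_diag: "mat_diag n f = mat n n (\<lambda>(i,j). if i = j then f i else 0)"
  unfolding mat_diag_def by (rule eq_matI, auto)

lemma circ_add: "circ n f + circ n g = circ n (\<lambda>k. f k + g k)"
proof -
  let ?D1 = "mat_diag n (\<lambda>k. complex_of_real (f k))" and ?D2 = "mat_diag n (\<lambda>k. complex_of_real (g k))"
  have d: "mat_diag n (\<lambda>k. complex_of_real (f k + g k)) = ?D1 + ?D2"
    unfolding mat_diag_def by (rule eq_matI, auto)
  have "Vm n * (?D1 + ?D2) * dft_mat n = (Vm n * ?D1 + Vm n * ?D2) * dft_mat n"
    by (subst mult_add_distrib_mat[of _ n n], auto)
  also have "\<dots> = Vm n * ?D1 * dft_mat n + Vm n * ?D2 * dft_mat n"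
    by (rule add_mult_distrib_mat[of _ n n], auto)
  finally show ?thesis unfolding circ_def d by simp
qed

lemma circ_minus: "circ n f - circ n g = circ n (\<lambda>k. f k - g k)"
proof -
  let ?D1 = "mat_diag n (\<lambda>k. complex_of_real (f k))" and ?D2 = "mat_diag n (\<lambda>k. complex_of_real (g k))"
  have d: "mat_diag n (\<lambda>k. complex_of_real (f k - g k)) = ?D1 - ?D2"
    unfolding mat_diag_def by (rule eq_matI, auto)
  have "Vm n * (?D1 - ?D2) * dft_mat n = (Vm n * ?D1 - Vm n * ?D2) * dft_mat n"
    by (subst mult_minus_distrib_mat[of _ n n], auto)
  also have "\<dots> = Vm n * ?D1 * dft_mat n - Vm n * ?D2 * dft_mat n"
    by (rule minus_mult_distrib_mat[of _ n n], auto)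
  finally show ?thesis unfolding circ_def d by simp
qed

lemma circ_one: assumes n: "n > 0" shows "circ n (\<lambda>k. 1) = 1\<^sub>m n"
  unfolding circ_def using VU[OF n] by simp

lemma circ_entry:
  assumes i: "i < n" and j: "j < n"
  shows "circ n f $$ (i,j) = (\<Sum>k<n. complex_of_real (f k) * cis (2*pi*real k*(real i - real j)/real n)) / of_nat n"
proof -
  have "circ n f = Vm n * (mat_diag n (\<lambda>k. complex_of_real (f k)) * dft_mat n)"
    unfolding circ_def by (simp add: assoc_mult_mat[of _ n n _ n _ n])
  also have "mat_diag n (\<lambda>k. complex_of_real (f k)) * dft_mat n = mat n n (\<lambda>(i,j). complex_of_real (f i) * dft_mat n $$ (i,j))"
    by (rule mat_diag_mult_left, simp)
  finally have "circ n f $$ (i,j) = (\<Sum>k<n. Vm n $$ (i,k) * (complex_of_real (f k) * dft_mat n $$ (k,j)))"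
    using i j by (simp add: scalar_prod_def lessThan_atLeast0)
  also have "\<dots> = (\<Sum>k<n. complex_of_real (f k) * cis (2*pi*real k*(real i - real j)/real n)) / of_nat n"
    unfolding sum_divide_distrib
  proof (rule sum.cong[OF refl])
    fix k assume "k \<in> {..<n}"
    hence k: "k < n" by simp
    have "2*pi*real (i*k)/real n + -2*pi*real (k*j)/real n = 2*pi*real k*(real i - real j)/real n"
      by (cases "n = 0") (simp_all add: field_simps)
    hence "cis (2*pi*real (i*k)/real n) * cis (-2*pi*real (k*j)/real n) = cis (2*pi*real k*(real i - real j)/real n)"
      by (simp only: cis_mult)
    thus "Vm n $$ (i,k) * (complex_of_real (f k) * dft_mat n $$ (k,j)) = complex_of_real (f k) * cis (2*pi*real k*(real i - real j)/real n) / of_nat n"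
      using i j k by (simp add: Vm_entry dft_entry field_simps power2_eq_square[symmetric])
  qed
  finally show ?thesis .
qed

definition symm :: "nat \<Rightarrow> (nat \<Rightarrow> real) \<Rightarrow> bool" where
  "symm n f \<longleftrightarrow> (\<forall>k<n. f ((n - k) mod n) = f k)"

definition Rm :: "nat \<Rightarrow> (nat \<Rightarrow> real) \<Rightarrow> real mat" where
  "Rm n f = mat n n (\<lambda>(i,j). (\<Sum>k<n. f k * cos (2*pi*real k*(real i - real j)/real n)) / real n)"

lemma Rm_carrier[simp]: "Rm n f \<in> carrier_mat n n" unfolding Rm_def by simp
lemma Rm_dim[simp]: "dim_row (Rm n f) = n" "dim_col (Rm n f) = n" unfolding Rm_def by simp_all

lemma Rm_transpose: "transpose_mat (Rm n f) = Rm n f"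
proof (rule eq_matI)
  fix i j assume "i < dim_row (Rm n f)" "j < dim_col (Rm n f)"
  moreover have "cos (2*pi*real k*(real j - real i)/real n) = cos (2*pi*real k*(real i - real j)/real n)" for k
    by (metis cos_minus minus_diff_eq minus_divide_left mult_minus_right)
  ultimately show "transpose_mat (Rm n f) $$ (i,j) = Rm n f $$ (i,j)"
    unfolding Rm_def by simp
qed auto

lemma sin_sum_zero:
  assumes s: "symm n f" and n: "n > 0"
  shows "(\<Sum>k<n. f k * sin (2*pi*real k*(t::int)/real n)) = 0"
proof -
  define r where "r k = (n - k) mod n" for k
  have rr: "k < n \<Longrightarrow> r (r k) = k" for k unfolding r_def
    by (cases "k = 0", auto simp: mod_if)
  have rl: "k < n \<Longrightarrow> r k < n" for k unfolding r_def using n by simp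
  have sinr: "k < n \<Longrightarrow> sin (2*pi*real (r k)*t/real n) = - sin (2*pi*real k*t/real n)" for k
  proof (cases "k = 0")
    case False
    assume k: "k < n"
    with False have "r k = n - k" unfolding r_def by simp
    hence "2*pi*real (r k)*t/real n = 2*pi*t - 2*pi*real k*t/real n" using k n
      by (simp add: of_nat_diff field_simps)
    hence "sin (2*pi*real (r k)*t/real n) = sin (2*pi*real_of_int t - 2*pi*real k*t/real n)" by simp
    also have "\<dots> = - sin (2*pi*real k*t/real n)"
      unfolding sin_diff by (simp add: mult.assoc[symmetric])
    finally show ?thesis .
  qed (simp add: r_def)
  have "(\<Sum>k<n. f k * sin (2*pi*real k*t/real n)) = (\<Sum>k<n. f (r k) * sin (2*pi*real (r k)*t/real n))"
    by (rule sum.reindex_bij_witness[where i=r and j=r], auto simp: rr rl)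
  also have "\<dots> = - (\<Sum>k<n. f k * sin (2*pi*real k*t/real n))"
    unfolding sum_negf[symmetric]
  proof (rule sum.cong[OF refl])
    fix k assume "k \<in> {..<n}"
    hence k: "k < n" by simp
    have "f (r k) = f k" using s k unfolding symm_def r_def by simp
    thus "f (r k) * sin (2*pi*real (r k)*t/real n) = - (f k * sin (2*pi*real k*t/real n))"
      using sinr[OF k] by simp
  qed
  finally show ?thesis by simp
qed

lemma cmap_Rm: assumes s: "symm n f" and n: "n > 0"
  shows "cmap (Rm n f) = circ n f"
proof (rule eq_matI)
  fix i j assume "i < dim_row (circ n f)" "j < dim_col (circ n f)"
  hence i: "i < n" and j: "j < n" by auto
  let ?t = "int i - int j"
  have t: "real i - real j = real_of_int ?t" by simp
  have "circ n f $$ (i,j) = (\<Sum>k<n. complex_of_real (f k) * cis (2*pi*real k*(real i - real j)/real n)) / of_nat n"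
    by (rule circ_entry[OF i j])
  also have "(\<Sum>k<n. complex_of_real (f k) * cis (2*pi*real k*(real i - real j)/real n))
     = complex_of_real (\<Sum>k<n. f k * cos (2*pi*real k*(real i - real j)/real n))
       + \<i> * complex_of_real (\<Sum>k<n. f k * sin (2*pi*real k*(real i - real j)/real n))"
  proof -
    have "complex_of_real (f k) * cis (2*pi*real k*(real i - real j)/real n)
       = complex_of_real (f k * cos (2*pi*real k*(real i - real j)/real n))
       + \<i> * complex_of_real (f k * sin (2*pi*real k*(real i - real j)/real n))" for k
      by (rule complex_eqI) simp_all
    thus ?thesis by (simp add: sum.distrib sum_distrib_left)
  qed
  also have "(\<Sum>k<n. f k * sin (2*pi*real k*(real i - real j)/real n)) = 0"
    using sin_sum_zero[OF s n, of ?t] by (simp add: mult.assoc)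
  finally show "cmap (Rm n f) $$ (i,j) = circ n f $$ (i,j)"
    using i j unfolding Rm_def by simp
qed auto

lemma cmap_mult: "A \<in> carrier_mat nr n \<Longrightarrow> B \<in> carrier_mat n nc \<Longrightarrow> cmap (A * B) = cmap A * cmap B"
  by (rule of_real_hom.mat_hom_mult)

lemma cmap_one: "cmap (1\<^sub>m n) = 1\<^sub>m n" by (rule of_real_hom.mat_hom_one)

lemma Rm_cong: "(\<And>k. k < n \<Longrightarrow> f k = g k) \<Longrightarrow> Rm n f = Rm n g"
  unfolding Rm_def by (rule eq_matI, auto intro!: sum.cong)

lemma symm_const[simp]: "symm n (\<lambda>k. c)" unfolding symm_def by simp
lemma symm_mult[simp]: "symm n f \<Longrightarrow> symm n g \<Longrightarrow> symm n (\<lambda>k. f k * g k)" unfolding symm_def by simp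
lemma symm_add[simp]: "symm n f \<Longrightarrow> symm n g \<Longrightarrow> symm n (\<lambda>k. f k + g k)" unfolding symm_def by simp
lemma symm_minus[simp]: "symm n f \<Longrightarrow> symm n g \<Longrightarrow> symm n (\<lambda>k. f k - g k)" unfolding symm_def by simp

lemma Dhat_symm: "k < n \<Longrightarrow> Dhat n ((n - k) mod n) = Dhat n k"
proof (cases "k = 0")
  case False
  assume k: "k < n"
  hence e: "(n - k) mod n = n - k" using False by simp
  have "pi * real (n - k) / real n = pi - pi * real k / real n" using k
    by (simp add: of_nat_diff field_simps)
  thus ?thesis unfolding Dhat_def e by simp
qed simp

lemma symm_comp[simp]: "symm n (\<lambda>k. h (Dhat n k))"
  unfolding symm_def using Dhat_symm by simp

lemma symm_Dhat[simp]: "symm n (Dhat n)"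
  using symm_comp[of n "\<lambda>x. x"] by simp

lemma Rm_mult: assumes n: "n > 0" and f: "symm n f" and g: "symm n g"
  shows "Rm n f * Rm n g = Rm n (\<lambda>k. f k * g k)"
proof (rule cmap_inj)
  have "cmap (Rm n f * Rm n g) = cmap (Rm n f) * cmap (Rm n g)" by (rule cmap_mult) auto
  also have "\<dots> = circ n f * circ n g" using cmap_Rm[OF f n] cmap_Rm[OF g n] by simp
  also have "\<dots> = circ n (\<lambda>k. f k * g k)" by (rule circ_mult[OF n])
  also have "\<dots> = cmap (Rm n (\<lambda>k. f k * g k))" using cmap_Rm[OF symm_mult[OF f g] n] by simp
  finally show "cmap (Rm n f * Rm n g) = cmap (Rm n (\<lambda>k. f k * g k))" .
qed

lemma Rm_add: "Rm n f + Rm n g = Rm n (\<lambda>k. f k + g k)"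
  unfolding Rm_def by (rule eq_matI, auto simp: sum.distrib add_divide_distrib algebra_simps)

lemma Rm_minus: "Rm n f - Rm n g = Rm n (\<lambda>k. f k - g k)"
  unfolding Rm_def by (rule eq_matI, auto simp: sum_subtractf diff_divide_distrib algebra_simps)

lemma Rm_smult: "c \<cdot>\<^sub>m Rm n f = Rm n (\<lambda>k. c * f k)"
  unfolding Rm_def by (rule eq_matI, auto simp: sum_distrib_left algebra_simps)

lemma Rm_zero: "Rm n (\<lambda>k. 0) = 0\<^sub>m n n"
  unfolding Rm_def by (rule eq_matI, auto)

lemma Rm_one: assumes n: "n > 0" shows "Rm n (\<lambda>k. 1) = 1\<^sub>m n"
proof (rule cmap_inj)
  show "cmap (Rm n (\<lambda>k. 1)) = cmap (1\<^sub>m n)"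
    unfolding cmap_one cmap_Rm[OF symm_const n] circ_one[OF n] ..
qed

lemma m1: "(l::nat) < n \<Longrightarrow> Suc l mod n = (if Suc l = n then 0 else Suc l)"
  by auto

lemma m2: "(j::nat) < n \<Longrightarrow> (j + n - Suc 0) mod n = (if j = 0 then n - 1 else j - 1)"
proof (cases "j = 0")
  case False
  assume jn: "j < n"
  have e: "j + n - Suc 0 = (j - 1) + n" using False by simp
  have "(j + n - Suc 0) mod n = ((j - 1) + n) mod n" by (simp only: e)
  also have "\<dots> = (j - 1) mod n" by simp
  also have "\<dots> = j - 1" using jn by simp
  finally show ?thesis using False by simp
qed simp

lemma modA: "(l::nat) < n \<Longrightarrow> j < n \<Longrightarrow> (j = (l + 1) mod n) = (l = (j + n - 1) mod n)"
  by (simp add: m1 m2, arith)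

lemma modB: "(l::nat) < n \<Longrightarrow> j < n \<Longrightarrow> (j = (l + n - 1) mod n) = (l = (j + 1) mod n)"
  by (simp add: m1 m2, arith)

lemma cis_shift: "cis (a + 2 * pi * real_of_int m) = cis a"
  by (simp add: cis_mult[symmetric] cis_int_mult)

lemma cis_mod: assumes n: "n > 0"
  shows "cis (-2*pi*real (k * (m mod n))/real n) = cis (-2*pi*real (k*m)/real n)"
proof -
  have m: "real m = real (m div n) * real n + real (m mod n)"
    by (metis div_mult_mod_eq of_nat_add of_nat_mult)
  have e: "-2*pi*real (k*m)/real n = -2*pi*real (k * (m mod n))/real n + 2 * pi * real_of_int (- int (k * (m div n)))"
    using n by (simp add: m field_simps)
  have "cis (-2*pi*real (k*m)/real n) = cis (-2*pi*real (k * (m mod n))/real n + 2 * pi * real_of_int (- int (k * (m div n))))"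
    by (subst e) (rule refl)
  also have "\<dots> = cis (-2*pi*real (k * (m mod n))/real n)" by (rule cis_shift)
  finally show ?thesis by simp
qed

lemma sdelta: "a < (n::nat) \<Longrightarrow> (\<Sum>l<n. x l * (if l = a then 1 else 0)) = (x a :: complex)"
proof -
  assume a: "a < n"
  have "(\<Sum>l<n. x l * (if l = a then 1 else 0)) = (\<Sum>l<n. if l = a then x l else 0)"
    by (rule sum.cong) auto
  also have "\<dots> = x a" using a by (simp add: sum.delta[OF finite_lessThan])
  finally show ?thesis .
qed

lemma aux_alg: "(c*p)/s + (c*q)/s - 2*(c/s) = (p+q-2)*(c/(s::complex))"
  by (simp add: ring_distribs add_divide_distrib diff_divide_distrib mult.commute)

lemma dft_D2: assumes n: "n > 0"
  shows "dft_mat n * cmap (D2 n) = mat_diag n (\<lambda>k. complex_of_real (Dhat n k)) * dft_mat n"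
proof (rule eq_matI)
  fix k j assume "k < dim_row (mat_diag n (\<lambda>k. complex_of_real (Dhat n k)) * dft_mat n)"
    "j < dim_col (mat_diag n (\<lambda>k. complex_of_real (Dhat n k)) * dft_mat n)"
  hence k: "k < n" and j: "j < n" by auto
  let ?U = "dft_mat n"
  let ?s = "complex_of_real (sqrt (real n))"
  have D2e: "D2 n $$ (l,j) = (if l = (j + n - 1) mod n then 1 else 0) + (if l = (j + 1) mod n then 1 else 0)
      - (if l = j then 2 else 0)" if l: "l < n" for l
    using modA[OF l j] modB[OF l j] l j unfolding D2_def by simp
  have "(?U * cmap (D2 n)) $$ (k,j) = (\<Sum>l<n. ?U $$ (k,l) * complex_of_real (D2 n $$ (l,j)))"
    using k j by (simp add: scalar_prod_def lessThan_atLeast0 D2_def)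
  also have "\<dots> = (\<Sum>l<n. (?U $$ (k,l) * (if l = (j + n - 1) mod n then 1 else 0)
     + ?U $$ (k,l) * (if l = (j + 1) mod n then 1 else 0))
     - 2 * (?U $$ (k,l) * (if l = j then 1 else 0)))"
    by (rule sum.cong[OF refl], auto simp: D2e)
  also have "\<dots> = (\<Sum>l<n. ?U $$ (k,l) * (if l = (j + n - 1) mod n then 1 else 0))
     + (\<Sum>l<n. ?U $$ (k,l) * (if l = (j + 1) mod n then 1 else 0))
     - 2 * (\<Sum>l<n. ?U $$ (k,l) * (if l = j then 1 else 0))"
    by (simp only: sum_subtractf sum.distrib sum_distrib_left)
  also have "\<dots> = ?U $$ (k, (j + n - 1) mod n) + ?U $$ (k, (j + 1) mod n) - 2 * ?U $$ (k,j)"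
    using n j by (simp only: sdelta mod_less_divisor)
  also have "?U $$ (k, (j + n - 1) mod n) = cis (-2*pi*real (k*j)/real n) * cis (2*pi*real k/real n) / ?s"
  proof -
    have "?U $$ (k, (j + n - 1) mod n) = cis (-2*pi*real (k*((j + n - 1) mod n))/real n) / ?s"
      by (rule dft_entry) (use k n in auto)
    also have "\<dots> = cis (-2*pi*real (k*(j + n - 1))/real n) / ?s"
      by (simp only: cis_mod[OF n])
    also have "-2*pi*real (k*(j + n - 1))/real n = (-2*pi*real (k*j)/real n + 2*pi*real k/real n) + 2*pi*real_of_int (- int k)"
      using n by (simp add: of_nat_diff field_simps)
    finally show ?thesis by (simp only: cis_shift cis_mult)
  qed
  also have "?U $$ (k, (j + 1) mod n) = cis (-2*pi*real (k*j)/real n) * cis (-2*pi*real k/real n) / ?s"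
  proof -
    have "?U $$ (k, (j + 1) mod n) = cis (-2*pi*real (k*((j + 1) mod n))/real n) / ?s"
      by (rule dft_entry) (use k n in auto)
    also have "\<dots> = cis (-2*pi*real (k*(j + 1))/real n) / ?s"
      by (simp only: cis_mod[OF n])
    also have "-2*pi*real (k*(j + 1))/real n = -2*pi*real (k*j)/real n + -2*pi*real k/real n"
      using n by (simp add: field_simps)
    finally show ?thesis by (simp add: cis_mult)
  qed
  also have "cis (2*pi*real k/real n) + cis (-2*pi*real k/real n) - 2 = complex_of_real (Dhat n k)"
  proof -
    have "cos (2 * (pi * real k / real n)) = 1 - 2 * sin (pi * real k / real n) ^ 2" by (rule cos_double_sin)
    hence "2 * cos (2*pi*real k/real n) - 2 = Dhat n k" unfolding Dhat_def by (simp add: mult.assoc)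
    thus ?thesis by (intro complex_eqI) (simp_all add: cis.ctr)
  qed
  hence "cis (-2*pi*real (k*j)/real n) * cis (2*pi*real k/real n) / ?s
       + cis (-2*pi*real (k*j)/real n) * cis (-2*pi*real k/real n) / ?s - 2 * ?U $$ (k,j)
       = complex_of_real (Dhat n k) * ?U $$ (k,j)"
    using aux_alg[of "cis (-2*pi*real (k*j)/real n)" "cis (2*pi*real k/real n)" ?s "cis (-2*pi*real k/real n)"]
      dft_entry[OF k j] by simp
  also have "complex_of_real (Dhat n k) * ?U $$ (k,j) = (mat_diag n (\<lambda>k. complex_of_real (Dhat n k)) * dft_mat n) $$ (k,j)"
    using k j by (simp add: mat_diag_mult_left[of _ n n])
  finally show "(?U * cmap (D2 n)) $$ (k,j) = (mat_diag n (\<lambda>k. complex_of_real (Dhat n k)) * dft_mat n) $$ (k,j)" .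
qed (auto simp: D2_def)

lemma D2_carrier[simp]: "D2 n \<in> carrier_mat n n" unfolding D2_def by simp

lemma D2_Rm: assumes n: "n > 0" shows "D2 n = Rm n (Dhat n)"
proof (rule cmap_inj)
  have "cmap (D2 n) = (Vm n * dft_mat n) * cmap (D2 n)" unfolding VU[OF n] by (simp add: D2_def)
  also have "\<dots> = Vm n * (dft_mat n * cmap (D2 n))" by (rule assoc_mult_mat[of _ n n _ n _ n]) auto
  also have "\<dots> = circ n (Dhat n)" unfolding dft_D2[OF n] circ_def
    by (rule assoc_mult_mat[symmetric]) auto
  also have "\<dots> = cmap (Rm n (Dhat n))" using cmap_Rm[OF symm_Dhat n] by simp
  finally show "cmap (D2 n) = cmap (Rm n (Dhat n))" .
qed

definition Q :: "nat \<Rightarrow> (nat \<Rightarrow> real) \<Rightarrow> (nat \<Rightarrow> real) \<Rightarrow> (nat \<Rightarrow> real) \<Rightarrow> (nat \<Rightarrow> real) \<Rightarrow> real mat" where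
  "Q n a b c d = four_block_mat (Rm n a) (Rm n b) (Rm n c) (Rm n d)"

definition St :: "nat \<Rightarrow> (nat \<Rightarrow> real) \<Rightarrow> (nat \<Rightarrow> real) \<Rightarrow> real mat" where
  "St n a b = Rm n a @\<^sub>r Rm n b"

lemma Q_carrier[simp]: "Q n a b c d \<in> carrier_mat (n+n) (n+n)" unfolding Q_def by simp
lemma St_carrier[simp]: "St n a b \<in> carrier_mat (n+n) n" unfolding St_def by auto
lemma Q_dim[simp]: "dim_row (Q n a b c d) = n+n" "dim_col (Q n a b c d) = n+n" unfolding Q_def by simp_all
lemma St_dim[simp]: "dim_row (St n a b) = n+n" "dim_col (St n a b) = n" unfolding St_def append_rows_def by simp_all

lemma Q_mult: assumes n: "n > 0" and s: "symm n a" "symm n b" "symm n c" "symm n d"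
  "symm n a'" "symm n b'" "symm n c'" "symm n d'"
  shows "Q n a b c d * Q n a' b' c' d' = Q n (\<lambda>k. a k * a' k + b k * c' k) (\<lambda>k. a k * b' k + b k * d' k)
     (\<lambda>k. c k * a' k + d k * c' k) (\<lambda>k. c k * b' k + d k * d' k)"
  unfolding Q_def
  by (subst mult_four_block_mat[of _ n n _ n _ n _ _ n _ n], simp_all add: Rm_mult[OF n] Rm_add s)

lemma Q_add: "Q n a b c d + Q n a' b' c' d' = Q n (\<lambda>k. a k + a' k) (\<lambda>k. b k + b' k)
     (\<lambda>k. c k + c' k) (\<lambda>k. d k + d' k)"
  unfolding Q_def
  by (subst add_four_block_mat[of _ n n _ n _ n], simp_all add: Rm_add)

lemma minus_four_block_mat: assumes
  c1: "A1 \<in> carrier_mat nr1 nc1" "B1 \<in> carrier_mat nr1 nc2" "C1 \<in> carrier_mat nr2 nc1" "D1 \<in> carrier_mat nr2 nc2" and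
  c2: "A2 \<in> carrier_mat nr1 nc1" "B2 \<in> carrier_mat nr1 nc2" "C2 \<in> carrier_mat nr2 nc1" "D2' \<in> carrier_mat nr2 nc2"
  shows "four_block_mat A1 B1 C1 D1 - four_block_mat A2 B2 C2 D2'
  = four_block_mat (A1 - A2) (B1 - B2) (C1 - C2) (D1 - D2')"
  by (rule eq_matI, insert c1 c2, auto)

lemma Q_minus: "Q n a b c d - Q n a' b' c' d' = Q n (\<lambda>k. a k - a' k) (\<lambda>k. b k - b' k)
     (\<lambda>k. c k - c' k) (\<lambda>k. d k - d' k)"
  unfolding Q_def
  by (subst minus_four_block_mat[of _ n n _ n _ n], simp_all add: Rm_minus)

lemma Q_transpose: "transpose_mat (Q n a b c d) = Q n a c b d"
  unfolding Q_def
  by (subst transpose_four_block_mat[of _ n n _ n _ n], simp_all add: Rm_transpose)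

lemma Q_zero: "Q n (\<lambda>k. 0) (\<lambda>k. 0) (\<lambda>k. 0) (\<lambda>k. 0) = 0\<^sub>m (n+n) (n+n)"
  unfolding Q_def Rm_zero by (rule eq_matI, auto)

lemma Q_cong: "(\<And>k. k < n \<Longrightarrow> a k = a' k) \<Longrightarrow> (\<And>k. k < n \<Longrightarrow> b k = b' k) \<Longrightarrow>
   (\<And>k. k < n \<Longrightarrow> c k = c' k) \<Longrightarrow> (\<And>k. k < n \<Longrightarrow> d k = d' k) \<Longrightarrow> Q n a b c d = Q n a' b' c' d'"
  unfolding Q_def by (metis Rm_cong)

lemma St_cong: "(\<And>k. k < n \<Longrightarrow> a k = a' k) \<Longrightarrow> (\<And>k. k < n \<Longrightarrow> b k = b' k) \<Longrightarrow>
   St n a b = St n a' b'"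
  unfolding St_def by (metis Rm_cong)

lemma Q_St: assumes n: "n > 0" and s: "symm n a" "symm n b" "symm n c" "symm n d" "symm n x" "symm n y"
  shows "Q n a b c d * St n x y = St n (\<lambda>k. a k * x k + b k * y k) (\<lambda>k. c k * x k + d k * y k)"
  unfolding Q_def St_def append_rows_def
  by (subst mult_four_block_mat[of _ n n _ n _ n _ _ n _ 0], simp_all add: Rm_mult[OF n] Rm_add s)

lemma St_mult: assumes n: "n > 0" and s: "symm n x" "symm n y" "symm n w"
  shows "St n x y * Rm n w = St n (\<lambda>k. x k * w k) (\<lambda>k. y k * w k)"
proof -
  have w: "Rm n w = four_block_mat (Rm n w) (0\<^sub>m n 0) (0\<^sub>m 0 n) (0\<^sub>m 0 0)"
    by (rule eq_matI, auto)
  show ?thesis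
    unfolding St_def append_rows_def
    by (subst w, subst mult_four_block_mat[of _ n n _ 0 _ n _ _ n _ 0], simp_all add: Rm_mult[OF n] s)
qed

lemma St_St_T: assumes n: "n > 0" and s: "symm n x" "symm n y" "symm n u" "symm n v"
  shows "St n x y * transpose_mat (St n u v) = Q n (\<lambda>k. x k * u k) (\<lambda>k. x k * v k) (\<lambda>k. y k * u k) (\<lambda>k. y k * v k)"
  unfolding St_def append_rows_def Q_def
  by (subst transpose_four_block_mat[of _ n n _ 0 _ n], simp_all,
      subst mult_four_block_mat[of _ n n _ 0 _ n _ _ n _ n], simp_all add: Rm_mult[OF n] s Rm_transpose)

definition wS :: "nat \<Rightarrow> real \<Rightarrow> nat \<Rightarrow> real" where "wS n P1 k = 1 - P1 * Dhat n k"
definition lS :: "nat \<Rightarrow> real \<Rightarrow> real \<Rightarrow> nat \<Rightarrow> real" where "lS n P1 P4 k = L0hat n P1 P4 k"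
definition l1S :: "nat \<Rightarrow> real \<Rightarrow> real \<Rightarrow> nat \<Rightarrow> real" where "l1S n P1 P4 k = sqrt (2 / P4 * L0hat n P1 P4 k)"
definition qS :: "nat \<Rightarrow> real \<Rightarrow> real \<Rightarrow> nat \<Rightarrow> real" where "qS n P1 P4 k = 1 / (wS n P1 k * P4)"
definition s1S :: "nat \<Rightarrow> real \<Rightarrow> real \<Rightarrow> nat \<Rightarrow> real" where "s1S n P1 P4 k = l1S n P1 P4 k * qS n P1 P4 k"
definition s2S :: "nat \<Rightarrow> real \<Rightarrow> real \<Rightarrow> nat \<Rightarrow> real" where "s2S n P1 P4 k = lS n P1 P4 k * qS n P1 P4 k"
definition s3S :: "nat \<Rightarrow> real \<Rightarrow> real \<Rightarrow> nat \<Rightarrow> real" where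
  "s3S n P1 P4 k = s1S n P1 P4 k * (P4 * lS n P1 P4 k - Dhat n k)"

lemma symm_wS[simp]: "symm n (wS n P1)" unfolding symm_def wS_def by (simp add: Dhat_symm)
lemma symm_lS[simp]: "symm n (lS n P1 P4)" unfolding symm_def lS_def L0hat_def by (simp add: Dhat_symm)
lemma symm_l1S[simp]: "symm n (l1S n P1 P4)" unfolding symm_def l1S_def L0hat_def by (simp add: Dhat_symm)
lemma symm_qS[simp]: "symm n (qS n P1 P4)" unfolding symm_def qS_def wS_def by (simp add: Dhat_symm)
lemma symm_s1S[simp]: "symm n (s1S n P1 P4)" using symm_l1S symm_qS unfolding symm_def s1S_def by simp
lemma symm_s2S[simp]: "symm n (s2S n P1 P4)" using symm_lS symm_qS unfolding symm_def s2S_def by simp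
lemma symm_s3S[simp]: "symm n (s3S n P1 P4)" using symm_s1S symm_lS Dhat_symm unfolding symm_def s3S_def by simp

lemma Dhat_nonpos: "Dhat n k \<le> 0" unfolding Dhat_def by simp

lemma mode_facts:
  assumes P1: "P1 > 0" and P4: "P4 > 0"
  shows "wS n P1 k > 0" "lS n P1 P4 k > 0" "l1S n P1 P4 k > 0"
    "l1S n P1 P4 k * l1S n P1 P4 k * P4 = 2 * lS n P1 P4 k"
    "lS n P1 P4 k * lS n P1 P4 k * P4 - 2 * Dhat n k * lS n P1 P4 k - wS n P1 k * P4 = 0"
    "qS n P1 P4 k * wS n P1 k * P4 = 1"
    "P4 * lS n P1 P4 k - Dhat n k > 0"
proof -
  define d where "d = Dhat n k"
  define w where "w = wS n P1 k"
  define r where "r = sqrt (d\<^sup>2 / P4\<^sup>2 - P1 * d + 1)"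
  have d: "d \<le> 0" unfolding d_def by (rule Dhat_nonpos)
  have w: "w = 1 - P1 * d" unfolding w_def wS_def d_def ..
  have w1: "w \<ge> 1" using d P1 unfolding w by (simp add: mult_nonneg_nonpos)
  thus "wS n P1 k > 0" unfolding w_def by simp
  have rad: "d\<^sup>2 / P4\<^sup>2 - P1 * d + 1 = (d / P4)\<^sup>2 + w" unfolding w by (simp add: power_divide)
  have rnn0: "0 \<le> (d / P4)\<^sup>2 + w" using w1 by (intro add_nonneg_nonneg) auto
  have rnn: "0 \<le> d\<^sup>2 / P4\<^sup>2 - P1 * d + 1" using rnn0 unfolding rad .
  have "r\<^sup>2 = d\<^sup>2 / P4\<^sup>2 - P1 * d + 1" unfolding r_def by (rule real_sqrt_pow2[OF rnn])
  hence r2: "r\<^sup>2 = (d / P4)\<^sup>2 + w" unfolding rad .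
  have r0: "r \<ge> 0" unfolding r_def by (rule real_sqrt_ge_zero[OF rnn])
  have l: "lS n P1 P4 k = d / P4 + r" unfolding lS_def L0hat_def d_def r_def ..
  have "(-(d/P4))\<^sup>2 < r\<^sup>2" unfolding r2 using w1 by simp
  hence rgt: "-(d/P4) < r" using r0 by (rule power_less_imp_less_base)
  show lpos: "lS n P1 P4 k > 0" unfolding l using rgt by simp
  have "P4 * lS n P1 P4 k - Dhat n k = P4 * r" unfolding l d_def[symmetric] using P4 by (simp add: field_simps)
  moreover have "d / P4 \<le> 0" using d P4 by (rule divide_nonpos_pos)
  hence "r > 0" using rgt by linarith
  ultimately show "P4 * lS n P1 P4 k - Dhat n k > 0" using P4 by simp
  have "2 / P4 * lS n P1 P4 k > 0" using lpos P4 by simp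
  thus l1p: "l1S n P1 P4 k > 0" unfolding l1S_def lS_def by simp
  have "l1S n P1 P4 k * l1S n P1 P4 k = 2 / P4 * lS n P1 P4 k"
    unfolding l1S_def using lpos P4 unfolding lS_def by simp
  thus "l1S n P1 P4 k * l1S n P1 P4 k * P4 = 2 * lS n P1 P4 k" using P4 by simp
  define x where "x = d / P4"
  have dx: "d = x * P4" unfolding x_def using P4 by simp
  have "lS n P1 P4 k * lS n P1 P4 k * P4 - 2 * d * lS n P1 P4 k - w * P4
     = P4 * (r\<^sup>2 - (d/P4)\<^sup>2 - w)" unfolding l x_def[symmetric] dx by (simp add: algebra_simps power2_eq_square)
  also have "\<dots> = 0" unfolding r2 by simp
  finally show "lS n P1 P4 k * lS n P1 P4 k * P4 - 2 * Dhat n k * lS n P1 P4 k - wS n P1 k * P4 = 0"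
    unfolding d_def w_def .
  show "qS n P1 P4 k * wS n P1 k * P4 = 1" unfolding qS_def using w1 P4 unfolding w_def by simp
qed

lemma sysA_Q: assumes n: "n > 0" shows "sysA n = Q n (\<lambda>k. 0) (\<lambda>k. 1) (Dhat n) (\<lambda>k. 0)"
  unfolding sysA_def Q_def Rm_zero Rm_one[OF n] D2_Rm[OF n] ..

lemma sysB_St: assumes n: "n > 0" shows "sysB n = St n (\<lambda>k. 0) (\<lambda>k. 1)"
  unfolding sysB_def St_def Rm_zero Rm_one[OF n] ..

lemma P4_Rm: assumes n: "n > 0" shows "P4 \<cdot>\<^sub>m 1\<^sub>m n = Rm n (\<lambda>k. P4)"
  using Rm_smult[of P4 n "\<lambda>k. 1"] Rm_one[OF n] by simp

lemma sysC_T: assumes n: "n > 0" shows "transpose_mat (sysC n P4) = St n (\<lambda>k. P4) (\<lambda>k. 0)"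
  unfolding sysC_def St_def append_rows_def P4_Rm[OF n] Rm_zero
  by (subst transpose_four_block_mat[of _ n n _ n _ 0], simp_all add: Rm_transpose[of n "\<lambda>k. P4", unfolded])

lemma sysC_St: assumes n: "n > 0" shows "sysC n P4 = transpose_mat (St n (\<lambda>k. P4) (\<lambda>k. 0))"
  unfolding sysC_T[OF n, symmetric] by simp

lemma W_Rm: assumes n: "n > 0" shows "weightW n P1 = Rm n (wS n P1)"
proof -
  have "weightW n P1 = Rm n (\<lambda>k. 1) - Rm n (\<lambda>k. P1 * Dhat n k)"
    unfolding weightW_def Rm_one[OF n] D2_Rm[OF n] Rm_smult ..
  also have "\<dots> = Rm n (wS n P1)" unfolding Rm_minus wS_def by (rule Rm_cong) simp
  finally show ?thesis .
qed

lemma hG1: "q*w*P4 = 1 \<Longrightarrow> (a1 * q * P4 + s * 0) * w = (a1::real)"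
proof -
  assume h: "q*w*P4 = 1"
  have "(a1 * q * P4 + s * 0) * w = a1 * (q*w*P4)" by (simp add: algebra_simps)
  thus ?thesis using h by simp
qed
lemma hR1: "a1*a1*P4 = 2*a2 \<Longrightarrow> 0 * (a1 * q) + 1 * (a2 * q) + (a1 * q * 0 + a2 * q * 1) + 0 * 0 - (a1 * P4 * (a1 * q) + 0 * (a2 * (q::real))) = 0"
proof -
  assume h: "a1*a1*P4 = 2*a2"
  have "0 * (a1 * q) + 1 * (a2 * q) + (a1 * q * 0 + a2 * q * 1) + 0 * 0 - (a1 * P4 * (a1 * q) + 0 * (a2 * (q::real)))
    = q * (2*a2 - a1*a1*P4)" by (simp add: algebra_simps)
  thus ?thesis using h by simp
qed
lemma hR2: "0 * (a2*q) + 1 * (a1*q*(P4*a2 - d)) + (a1*q*d + a2*q*0) + 0*1 - (a1*P4*(a2*q) + 0*(a1*q*(P4*a2 - d))) = (0::real)"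
  by (simp add: algebra_simps)
lemma hR3: "d*(a1*q) + 0*(a2*q) + (a2*q*0 + a1*q*(P4*a2 - d)*1) + 1*0 - (a2*P4*(a1*q) + 0*(a2*q)) = (0::real)"
  by (simp add: algebra_simps)
lemma hR4: "a2*a2*P4 - 2*d*a2 - w*P4 = 0 \<Longrightarrow> q*w*P4 = 1 \<Longrightarrow> d*(a2*q) + 0*(a1*q*(P4*a2 - d)) + (a2*q*d + a1*q*(P4*a2-d)*0) + 1*1 - (a2*P4*(a2*q) + 0*(a1*q*(P4*a2-d))) = (0::real)"
proof -
  assume h1: "a2*a2*P4 - 2*d*a2 - w*P4 = 0" and h2: "q*w*P4 = 1"
  have e: "a2*a2*P4 - 2*d*a2 = w*P4" using h1 by simp
  have "d*(a2*q) + 0*(a1*q*(P4*a2 - d)) + (a2*q*d + a1*q*(P4*a2-d)*0) + 1*1 - (a2*P4*(a2*q) + 0*(a1*q*(P4*a2-d)))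
    = 1 - q*(a2*a2*P4 - 2*d*a2)" by (simp add: algebra_simps)
  also have "\<dots> = 1 - q*w*P4" unfolding e by (simp add: mult.assoc)
  finally show ?thesis using h2 by simp
qed

definition Ssol :: "nat \<Rightarrow> real \<Rightarrow> real \<Rightarrow> real mat" where
  "Ssol n P1 P4 = Q n (s1S n P1 P4) (s2S n P1 P4) (s2S n P1 P4) (s3S n P1 P4)"

context
  fixes n :: nat and P1 P4 :: real
  assumes n: "n > 0" and P1: "P1 > 0" and P4: "P4 > 0"
begin

lemma gain_formula:
  "Ssol n P1 P4 * transpose_mat (sysC n P4) * weightW n P1 = St n (l1S n P1 P4) (lS n P1 P4)"
proof -
  have "Ssol n P1 P4 * transpose_mat (sysC n P4) = St n (\<lambda>k. s1S n P1 P4 k * P4 + s2S n P1 P4 k * 0) (\<lambda>k. s2S n P1 P4 k * P4 + s3S n P1 P4 k * 0)"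
    unfolding Ssol_def sysC_T[OF n] by (rule Q_St[OF n]) simp_all
  hence "Ssol n P1 P4 * transpose_mat (sysC n P4) * weightW n P1 = St n (\<lambda>k. s1S n P1 P4 k * P4 + s2S n P1 P4 k * 0) (\<lambda>k. s2S n P1 P4 k * P4 + s3S n P1 P4 k * 0) * weightW n P1" by simp
  also have "\<dots> = St n (\<lambda>k. (s1S n P1 P4 k * P4 + s2S n P1 P4 k * 0) * wS n P1 k) (\<lambda>k. (s2S n P1 P4 k * P4 + s3S n P1 P4 k * 0) * wS n P1 k)"
    unfolding W_Rm[OF n] by (rule St_mult[OF n]) simp_all
  also have "\<dots> = St n (l1S n P1 P4) (lS n P1 P4)"
  proof (rule St_cong)
    fix k
    note f = mode_facts[OF P1 P4, of n k]
    define a1 where "a1 = l1S n P1 P4 k"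
    define a2 where "a2 = lS n P1 P4 k"
    define q where "q = qS n P1 P4 k"
    define w where "w = wS n P1 k"
    note f' = f[folded a1_def a2_def q_def w_def]
    show "(s1S n P1 P4 k * P4 + s2S n P1 P4 k * 0) * wS n P1 k = l1S n P1 P4 k"
      unfolding s1S_def a1_def[symmetric] q_def[symmetric] w_def[symmetric] by (rule hG1[OF f'(6)])
    show "(s2S n P1 P4 k * P4 + s3S n P1 P4 k * 0) * wS n P1 k = lS n P1 P4 k"
      unfolding s2S_def a2_def[symmetric] q_def[symmetric] w_def[symmetric] by (rule hG1[OF f'(6)])
  qed
  finally show ?thesis .
qed

lemma LC_formula:
  "Ssol n P1 P4 * transpose_mat (sysC n P4) * weightW n P1 * sysC n P4
    = Q n (\<lambda>k. l1S n P1 P4 k * P4) (\<lambda>k. 0) (\<lambda>k. lS n P1 P4 k * P4) (\<lambda>k. 0)"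
proof -
  have "St n (l1S n P1 P4) (lS n P1 P4) * transpose_mat (St n (\<lambda>k. P4) (\<lambda>k. 0))
     = Q n (\<lambda>k. l1S n P1 P4 k * P4) (\<lambda>k. l1S n P1 P4 k * 0) (\<lambda>k. lS n P1 P4 k * P4) (\<lambda>k. lS n P1 P4 k * 0)"
    by (rule St_St_T[OF n]) simp_all
  also have "\<dots> = Q n (\<lambda>k. l1S n P1 P4 k * P4) (\<lambda>k. 0) (\<lambda>k. lS n P1 P4 k * P4) (\<lambda>k. 0)"
    by (rule Q_cong) simp_all
  finally show ?thesis unfolding gain_formula unfolding sysC_St[OF n] .
qed

lemma riccati:
  "sysA n * Ssol n P1 P4 + Ssol n P1 P4 * transpose_mat (sysA n) + sysB n * transpose_mat (sysB n)
   - Ssol n P1 P4 * transpose_mat (sysC n P4) * weightW n P1 * sysC n P4 * Ssol n P1 P4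
   = 0\<^sub>m (dim_row (sysA n)) (dim_row (sysA n))"
proof -
  let ?s1 = "s1S n P1 P4" and ?s2 = "s2S n P1 P4" and ?s3 = "s3S n P1 P4"
    and ?l = "lS n P1 P4" and ?l1 = "l1S n P1 P4" and ?d = "Dhat n"
  have symmfun: "symm n (\<lambda>k. c k)" if "symm n c" for c using that by simp
  have "sysA n * Ssol n P1 P4 + Ssol n P1 P4 * transpose_mat (sysA n) + sysB n * transpose_mat (sysB n)
   - Ssol n P1 P4 * transpose_mat (sysC n P4) * weightW n P1 * sysC n P4 * Ssol n P1 P4
   = Q n (\<lambda>k. 0 * ?s1 k + 1 * ?s2 k) (\<lambda>k. 0 * ?s2 k + 1 * ?s3 k) (\<lambda>k. ?d k * ?s1 k + 0 * ?s2 k) (\<lambda>k. ?d k * ?s2 k + 0 * ?s3 k)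
    + Q n (\<lambda>k. ?s1 k * 0 + ?s2 k * 1) (\<lambda>k. ?s1 k * ?d k + ?s2 k * 0) (\<lambda>k. ?s2 k * 0 + ?s3 k * 1) (\<lambda>k. ?s2 k * ?d k + ?s3 k * 0)
    + Q n (\<lambda>k. 0 * 0) (\<lambda>k. 0 * 1) (\<lambda>k. 1 * 0) (\<lambda>k. 1 * 1)
    - Q n (\<lambda>k. ?l1 k * P4 * ?s1 k + 0 * ?s2 k) (\<lambda>k. ?l1 k * P4 * ?s2 k + 0 * ?s3 k)
          (\<lambda>k. ?l k * P4 * ?s1 k + 0 * ?s2 k) (\<lambda>k. ?l k * P4 * ?s2 k + 0 * ?s3 k)"
  proof -
    have e1: "sysA n * Ssol n P1 P4 = Q n (\<lambda>k. 0 * ?s1 k + 1 * ?s2 k) (\<lambda>k. 0 * ?s2 k + 1 * ?s3 k) (\<lambda>k. ?d k * ?s1 k + 0 * ?s2 k) (\<lambda>k. ?d k * ?s2 k + 0 * ?s3 k)"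
      unfolding sysA_Q[OF n] Ssol_def by (rule Q_mult[OF n]) simp_all
    have e2: "Ssol n P1 P4 * transpose_mat (sysA n) = Q n (\<lambda>k. ?s1 k * 0 + ?s2 k * 1) (\<lambda>k. ?s1 k * ?d k + ?s2 k * 0) (\<lambda>k. ?s2 k * 0 + ?s3 k * 1) (\<lambda>k. ?s2 k * ?d k + ?s3 k * 0)"
      unfolding sysA_Q[OF n] Ssol_def Q_transpose by (rule Q_mult[OF n]) simp_all
    have e3: "sysB n * transpose_mat (sysB n) = Q n (\<lambda>k. 0 * 0) (\<lambda>k. 0 * 1) (\<lambda>k. 1 * 0) (\<lambda>k. 1 * 1)"
      unfolding sysB_St[OF n] by (rule St_St_T[OF n]) simp_all
    have e4: "Ssol n P1 P4 * transpose_mat (sysC n P4) * weightW n P1 * sysC n P4 * Ssol n P1 P4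
      = Q n (\<lambda>k. ?l1 k * P4 * ?s1 k + 0 * ?s2 k) (\<lambda>k. ?l1 k * P4 * ?s2 k + 0 * ?s3 k)
          (\<lambda>k. ?l k * P4 * ?s1 k + 0 * ?s2 k) (\<lambda>k. ?l k * P4 * ?s2 k + 0 * ?s3 k)"
      unfolding LC_formula unfolding Ssol_def by (rule Q_mult[OF n]) simp_all
    show ?thesis unfolding e1 e2 e3 e4 ..
  qed
  also have "\<dots> = Q n (\<lambda>k. 0) (\<lambda>k. 0) (\<lambda>k. 0) (\<lambda>k. 0)"
    unfolding Q_add Q_minus
  proof (rule Q_cong)
    fix k
    note f = mode_facts[OF P1 P4, of n k]
    define a1 where "a1 = l1S n P1 P4 k"
    define a2 where "a2 = lS n P1 P4 k"
    define q where "q = qS n P1 P4 k"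
    define w where "w = wS n P1 k"
    define d where "d = Dhat n k"
    note f' = f[folded a1_def a2_def q_def w_def d_def]
    note defs = s1S_def s2S_def s3S_def a1_def[symmetric] a2_def[symmetric] q_def[symmetric] w_def[symmetric] d_def[symmetric]
    show "0 * ?s1 k + 1 * ?s2 k + (?s1 k * 0 + ?s2 k * 1) + 0 * 0 - (?l1 k * P4 * ?s1 k + 0 * ?s2 k) = 0"
      unfolding defs by (rule hR1[OF f'(4)])
    show "0 * ?s2 k + 1 * ?s3 k + (?s1 k * ?d k + ?s2 k * 0) + 0 * 1 - (?l1 k * P4 * ?s2 k + 0 * ?s3 k) = 0"
      unfolding defs by (rule hR2)
    show "?d k * ?s1 k + 0 * ?s2 k + (?s2 k * 0 + ?s3 k * 1) + 1 * 0 - (?l k * P4 * ?s1 k + 0 * ?s2 k) = 0"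
      unfolding defs by (rule hR3)
    show "?d k * ?s2 k + 0 * ?s3 k + (?s2 k * ?d k + ?s3 k * 0) + 1 * 1 - (?l k * P4 * ?s2 k + 0 * ?s3 k) = 0"
      unfolding defs by (rule hR4[OF f'(5) f'(6)])
  qed
  also have "\<dots> = 0\<^sub>m (dim_row (sysA n)) (dim_row (sysA n))"
    unfolding Q_zero sysA_Q[OF n] by simp
  finally show ?thesis .
qed

end

lemma circ_mv[simp]: "v \<in> carrier_vec n \<Longrightarrow> circ n f *\<^sub>v v \<in> carrier_vec n" unfolding carrier_vec_def by simp
lemma dft_mv[simp]: "v \<in> carrier_vec n \<Longrightarrow> dft_mat n *\<^sub>v v \<in> carrier_vec n" unfolding carrier_vec_def by simp
lemma Vm_mv[simp]: "v \<in> carrier_vec n \<Longrightarrow> Vm n *\<^sub>v v \<in> carrier_vec n" unfolding carrier_vec_def by simp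
lemma diag_mv[simp]: "v \<in> carrier_vec n \<Longrightarrow> mat_diag n f *\<^sub>v v \<in> carrier_vec n" unfolding carrier_vec_def by simp

lemma vsplit: assumes "x \<in> carrier_vec (n+n)"
  shows "x = vec n (\<lambda>i. x$i) @\<^sub>v vec n (\<lambda>i. x$(n+i))"
  by (rule eq_vecI) (use assms in auto)

lemma smult_append: "c \<cdot>\<^sub>v (v1 @\<^sub>v v2) = (c \<cdot>\<^sub>v v1) @\<^sub>v (c \<cdot>\<^sub>v v2)"
  by (rule eq_vecI) auto

lemma U_circ: assumes n: "n > 0"
  shows "dft_mat n * circ n f = mat_diag n (\<lambda>k. complex_of_real (f k)) * dft_mat n"
proof -
  let ?D = "mat_diag n (\<lambda>k. complex_of_real (f k))"
  have "dft_mat n * circ n f = dft_mat n * (Vm n * (?D * dft_mat n))"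
    unfolding circ_def by (subst assoc_mult_mat[of _ n n _ n _ n]) auto
  also have "\<dots> = (dft_mat n * Vm n) * (?D * dft_mat n)"
    by (rule assoc_mult_mat[symmetric, of _ n n _ n _ n]) auto
  also have "\<dots> = ?D * dft_mat n" unfolding UV[OF n] by simp
  finally show ?thesis .
qed

lemma cmap_Q: assumes n: "n > 0" and s: "symm n a" "symm n b" "symm n c" "symm n d"
  shows "cmap (Q n a b c d) = four_block_mat (circ n a) (circ n b) (circ n c) (circ n d)"
  unfolding Q_def by (subst map_four_block_mat[of _ n n _ n _ n]) (simp_all add: cmap_Rm[OF _ n] s)

lemma det2:
  fixes a b c d l x y :: complex
  assumes e1: "a * x + b * y = l * x" and e2: "c * x + d * y = l * y" and nz: "x \<noteq> 0 \<or> y \<noteq> 0"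
  shows "(a - l) * (d - l) - b * c = 0"
proof -
  have "((a - l) * (d - l) - b * c) * x = (d - l) * (a * x + b * y - l * x) - b * (c * x + d * y - l * y)"
    by (simp add: algebra_simps)
  also have "\<dots> = 0" using e1 e2 by simp
  finally have hx: "((a - l) * (d - l) - b * c) * x = 0" .
  have "((a - l) * (d - l) - b * c) * y = (a - l) * (c * x + d * y - l * y) - c * (a * x + b * y - l * x)"
    by (simp add: algebra_simps)
  also have "\<dots> = 0" using e1 e2 by simp
  finally have hy: "((a - l) * (d - l) - b * c) * y = 0" .
  from nz hx hy show ?thesis by auto
qed

lemma diag_mult_vec: assumes k: "k < n" and w: "w \<in> carrier_vec n"
  shows "(mat_diag n f *\<^sub>v w) $ k = f k * w $ k"
proof -
  have "(mat_diag n f *\<^sub>v w) $ k = (\<Sum>i<n. (if k = i then f i else 0) * w $ i)"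
    using k w by (simp add: mat_diag_def scalar_prod_def lessThan_atLeast0)
  also have "\<dots> = (\<Sum>i<n. if i = k then f k * w $ k else 0)" by (rule sum.cong) auto
  also have "\<dots> = f k * w $ k" using k by simp
  finally show ?thesis .
qed

lemma U_apply: assumes n: "n > 0" and v1: "v1 \<in> carrier_vec n" and v2: "v2 \<in> carrier_vec n"
  and e: "circ n a *\<^sub>v v1 + circ n b *\<^sub>v v2 = l \<cdot>\<^sub>v v1" and k: "k < n"
  shows "complex_of_real (a k) * (dft_mat n *\<^sub>v v1) $ k + complex_of_real (b k) * (dft_mat n *\<^sub>v v2) $ k
     = l * (dft_mat n *\<^sub>v v1) $ k"
proof -
  let ?U = "dft_mat n"
  have "?U *\<^sub>v (circ n a *\<^sub>v v1 + circ n b *\<^sub>v v2) = ?U *\<^sub>v (l \<cdot>\<^sub>v v1)" using e by simp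
  moreover have "?U *\<^sub>v (circ n a *\<^sub>v v1 + circ n b *\<^sub>v v2) = (?U * circ n a) *\<^sub>v v1 + (?U * circ n b) *\<^sub>v v2"
  proof -
    have "?U *\<^sub>v (circ n a *\<^sub>v v1 + circ n b *\<^sub>v v2) = ?U *\<^sub>v (circ n a *\<^sub>v v1) + ?U *\<^sub>v (circ n b *\<^sub>v v2)"
      by (rule mult_add_distrib_mat_vec[of _ n n]) (use v1 v2 in auto)
    also have "?U *\<^sub>v (circ n a *\<^sub>v v1) = (?U * circ n a) *\<^sub>v v1"
      by (rule assoc_mult_mat_vec[symmetric, of _ n n _ n]) (use v1 in auto)
    also have "?U *\<^sub>v (circ n b *\<^sub>v v2) = (?U * circ n b) *\<^sub>v v2"
      by (rule assoc_mult_mat_vec[symmetric, of _ n n _ n]) (use v2 in auto)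
    finally show ?thesis .
  qed
  moreover have "?U *\<^sub>v (l \<cdot>\<^sub>v v1) = l \<cdot>\<^sub>v (?U *\<^sub>v v1)" using v1 by (simp add: mult_mat_vec[of _ n n])
  ultimately have "(mat_diag n (\<lambda>k. complex_of_real (a k)) * ?U) *\<^sub>v v1 + (mat_diag n (\<lambda>k. complex_of_real (b k)) * ?U) *\<^sub>v v2
     = l \<cdot>\<^sub>v (?U *\<^sub>v v1)" unfolding U_circ[OF n] by simp
  hence "mat_diag n (\<lambda>k. complex_of_real (a k)) *\<^sub>v (?U *\<^sub>v v1) + mat_diag n (\<lambda>k. complex_of_real (b k)) *\<^sub>v (?U *\<^sub>v v2)
     = l \<cdot>\<^sub>v (?U *\<^sub>v v1)"
    using v1 v2 assoc_mult_mat_vec[of "mat_diag n (\<lambda>k. complex_of_real (a k))" n n ?U n v1]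
      assoc_mult_mat_vec[of "mat_diag n (\<lambda>k. complex_of_real (b k))" n n ?U n v2] by simp
  hence "(mat_diag n (\<lambda>k. complex_of_real (a k)) *\<^sub>v (?U *\<^sub>v v1) + mat_diag n (\<lambda>k. complex_of_real (b k)) *\<^sub>v (?U *\<^sub>v v2)) $ k
     = (l \<cdot>\<^sub>v (?U *\<^sub>v v1)) $ k" by simp
  moreover have "(mat_diag n (\<lambda>k. complex_of_real (a k)) *\<^sub>v (?U *\<^sub>v v1) + mat_diag n (\<lambda>k. complex_of_real (b k)) *\<^sub>v (?U *\<^sub>v v2)) $ k
     = (mat_diag n (\<lambda>k. complex_of_real (a k)) *\<^sub>v (?U *\<^sub>v v1)) $ k + (mat_diag n (\<lambda>k. complex_of_real (b k)) *\<^sub>v (?U *\<^sub>v v2)) $ k"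
    by (rule index_add_vec) (use k v2 in simp)
  moreover have "(l \<cdot>\<^sub>v (?U *\<^sub>v v1)) $ k = l * (?U *\<^sub>v v1) $ k" using k v1 by simp
  moreover have "(mat_diag n (\<lambda>k. complex_of_real (a k)) *\<^sub>v (?U *\<^sub>v v1)) $ k = complex_of_real (a k) * (?U *\<^sub>v v1) $ k"
    by (rule diag_mult_vec[OF k]) (use v1 in simp)
  moreover have "(mat_diag n (\<lambda>k. complex_of_real (b k)) *\<^sub>v (?U *\<^sub>v v2)) $ k = complex_of_real (b k) * (?U *\<^sub>v v2) $ k"
    by (rule diag_mult_vec[OF k]) (use v2 in simp)
  ultimately show ?thesis by simp
qed

lemma eig_Q: assumes n: "n > 0" and s: "symm n a" "symm n b" "symm n c" "symm n d"
  and ev: "eigenvalue (cmap (Q n a b c d)) l"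
  shows "\<exists>k<n. (complex_of_real (a k) - l) * (complex_of_real (d k) - l) - complex_of_real (b k) * complex_of_real (c k) = 0"
proof -
  from ev obtain v where "eigenvector (cmap (Q n a b c d)) v l" unfolding eigenvalue_def by blast
  hence v: "v \<in> carrier_vec (n+n)" "v \<noteq> 0\<^sub>v (n+n)" "cmap (Q n a b c d) *\<^sub>v v = l \<cdot>\<^sub>v v"
    unfolding eigenvector_def by auto
  define v1 where "v1 = vec n (\<lambda>i. v$i)"
  define v2 where "v2 = vec n (\<lambda>i. v$(n+i))"
  have vs: "v = v1 @\<^sub>v v2" unfolding v1_def v2_def by (rule vsplit[OF v(1)])
  have c1: "v1 \<in> carrier_vec n" and c2: "v2 \<in> carrier_vec n" unfolding v1_def v2_def by auto
  have "cmap (Q n a b c d) *\<^sub>v v = (circ n a *\<^sub>v v1 + circ n b *\<^sub>v v2) @\<^sub>v (circ n c *\<^sub>v v1 + circ n d *\<^sub>v v2)"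
    unfolding cmap_Q[OF n s] vs by (rule four_block_mat_mult_vec[OF _ _ _ _ c1 c2]) auto
  moreover have "l \<cdot>\<^sub>v v = (l \<cdot>\<^sub>v v1) @\<^sub>v (l \<cdot>\<^sub>v v2)" unfolding vs smult_append ..
  ultimately have "(circ n a *\<^sub>v v1 + circ n b *\<^sub>v v2) @\<^sub>v (circ n c *\<^sub>v v1 + circ n d *\<^sub>v v2) = (l \<cdot>\<^sub>v v1) @\<^sub>v (l \<cdot>\<^sub>v v2)"
    using v(3) by simp
  hence "circ n a *\<^sub>v v1 + circ n b *\<^sub>v v2 = l \<cdot>\<^sub>v v1 \<and> circ n c *\<^sub>v v1 + circ n d *\<^sub>v v2 = l \<cdot>\<^sub>v v2"
    by (rule append_vec_eq[THEN iffD1, rotated 2]) (use c1 c2 in auto)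
  hence e1: "circ n a *\<^sub>v v1 + circ n b *\<^sub>v v2 = l \<cdot>\<^sub>v v1" and e2: "circ n c *\<^sub>v v1 + circ n d *\<^sub>v v2 = l \<cdot>\<^sub>v v2"
    by auto
  have e2': "circ n d *\<^sub>v v2 + circ n c *\<^sub>v v1 = l \<cdot>\<^sub>v v2"
    using comm_add_vec[of "circ n c *\<^sub>v v1" n "circ n d *\<^sub>v v2"] c1 c2 e2 by simp
  define h1 where "h1 = dft_mat n *\<^sub>v v1"
  define h2 where "h2 = dft_mat n *\<^sub>v v2"
  have "\<exists>k<n. h1 $ k \<noteq> 0 \<or> h2 $ k \<noteq> 0"
  proof (rule ccontr)
    assume "\<not> ?thesis"
    hence "h1 = 0\<^sub>v n" "h2 = 0\<^sub>v n" unfolding h1_def h2_def by (auto intro!: eq_vecI)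
    hence "Vm n *\<^sub>v h1 = 0\<^sub>v n" "Vm n *\<^sub>v h2 = 0\<^sub>v n" by auto
    moreover have "Vm n *\<^sub>v h1 = v1" "Vm n *\<^sub>v h2 = v2" unfolding h1_def h2_def
      using c1 c2 by (simp_all add: assoc_mult_mat_vec[symmetric, of _ n n _ n] VU[OF n])
    ultimately have "v1 = 0\<^sub>v n" "v2 = 0\<^sub>v n" by auto
    hence "v = 0\<^sub>v (n+n)" unfolding vs by (auto intro!: eq_vecI)
    with v(2) show False by simp
  qed
  then obtain k where k: "k < n" and nz: "h1 $ k \<noteq> 0 \<or> h2 $ k \<noteq> 0" by blast
  have r1: "complex_of_real (a k) * h1 $ k + complex_of_real (b k) * h2 $ k = l * h1 $ k"
    unfolding h1_def h2_def by (rule U_apply[OF n c1 c2 e1 k])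
  have r2: "complex_of_real (d k) * h2 $ k + complex_of_real (c k) * h1 $ k = l * h2 $ k"
    unfolding h1_def h2_def by (rule U_apply[OF n c2 c1 e2' k])
  have "(complex_of_real (a k) - l) * (complex_of_real (d k) - l) - complex_of_real (b k) * complex_of_real (c k) = 0"
    by (rule det2[OF r1 _ nz]) (use r2 in \<open>simp add: algebra_simps\<close>)
  thus ?thesis using k by blast
qed

lemma quad_re:
  fixes z :: complex
  assumes p: "p > 0" and q: "q > 0" and e: "z * z + complex_of_real p * z + complex_of_real q = 0"
  shows "Re z < 0"
proof -
  define x where "x = Re z"
  define y where "y = Im z"
  have re: "x * x - y * y + p * x + q = 0" using arg_cong[OF e, of Re] unfolding x_def y_def by simp
  have im: "y * (2 * x + p) = 0" using arg_cong[OF e, of Im] unfolding x_def y_def by (simp add: algebra_simps)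
  show ?thesis
  proof (cases "y = 0")
    case True
    with re have "x * x + p * x + q = 0" by simp
    show ?thesis
    proof (rule ccontr)
      assume "\<not> Re z < 0"
      hence "x \<ge> 0" unfolding x_def by simp
      hence "x * x + p * x + q > 0" using p q by (simp add: add_nonneg_pos)
      with \<open>x * x + p * x + q = 0\<close> show False by simp
    qed
  next
    case False
    with im have "2 * x + p = 0" by simp
    thus ?thesis using p unfolding x_def by simp
  qed
qed

lemma tri_sylv:
  fixes T1 T2 Y :: "complex mat"
  assumes T1: "T1 \<in> carrier_mat m m" and T2: "T2 \<in> carrier_mat m m" and Y: "Y \<in> carrier_mat m m"
    and u1: "upper_triangular T1" and u2: "upper_triangular T2"
    and d1: "\<And>i. i < m \<Longrightarrow> Re (T1 $$ (i,i)) < 0"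
    and d2: "\<And>i. i < m \<Longrightarrow> Re (T2 $$ (i,i)) < 0"
    and eq: "T1 * Y + Y * transpose_mat T2 = 0\<^sub>m m m"
  shows "Y = 0\<^sub>m m m"
proof -
  have main: "Y $$ (i,j) = 0" if "i < m" "j < m" for i j
    using that
  proof (induction "(m - i) + (m - j)" arbitrary: i j rule: less_induct)
    case less
    note i = less.prems(1) and j = less.prems(2)
    have IH1: "Y $$ (k,j) = 0" if "i < k" "k < m" for k
      using less.hyps[of k j] that j i by auto
    have IH2: "Y $$ (i,k) = 0" if "j < k" "k < m" for k
      using less.hyps[of i k] that j i by auto
    have "(T1 * Y + Y * transpose_mat T2) $$ (i,j) = 0" using eq i j by simp
    hence e: "(\<Sum>k<m. T1 $$ (i,k) * Y $$ (k,j)) + (\<Sum>k<m. Y $$ (i,k) * T2 $$ (j,k)) = 0"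
      using i j T1 T2 Y by (simp add: scalar_prod_def lessThan_atLeast0)
    have s1: "(\<Sum>k<m. T1 $$ (i,k) * Y $$ (k,j)) = (\<Sum>k<m. if k = i then T1 $$ (i,i) * Y $$ (i,j) else 0)"
    proof (rule sum.cong[OF refl])
      fix k assume "k \<in> {..<m}"
      hence k: "k < m" by simp
      show "T1 $$ (i,k) * Y $$ (k,j) = (if k = i then T1 $$ (i,i) * Y $$ (i,j) else 0)"
      proof (cases "k < i")
        case True
        hence "T1 $$ (i,k) = 0" using u1 i T1 by auto
        thus ?thesis using True by simp
      next
        case False
        thus ?thesis using IH1[OF _ k] by (cases "k = i") auto
      qed
    qed
    have s2: "(\<Sum>k<m. Y $$ (i,k) * T2 $$ (j,k)) = (\<Sum>k<m. if k = j then Y $$ (i,j) * T2 $$ (j,j) else 0)"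
    proof (rule sum.cong[OF refl])
      fix k assume "k \<in> {..<m}"
      hence k: "k < m" by simp
      show "Y $$ (i,k) * T2 $$ (j,k) = (if k = j then Y $$ (i,j) * T2 $$ (j,j) else 0)"
      proof (cases "k < j")
        case True
        hence "T2 $$ (j,k) = 0" using u2 j T2 by auto
        thus ?thesis using True by simp
      next
        case False
        thus ?thesis using IH2[OF _ k] by (cases "k = j") auto
      qed
    qed
    from e have "(T1 $$ (i,i) + T2 $$ (j,j)) * Y $$ (i,j) = 0"
      unfolding s1 s2 using i j by (simp add: algebra_simps)
    moreover have "T1 $$ (i,i) + T2 $$ (j,j) \<noteq> 0"
    proof
      assume "T1 $$ (i,i) + T2 $$ (j,j) = 0"
      hence "Re (T1 $$ (i,i)) + Re (T2 $$ (j,j)) = 0" by (metis plus_complex.sel(1) zero_complex.sel(1))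
      with d1[OF i] d2[OF j] show False by simp
    qed
    ultimately show ?case by simp
  qed
  show ?thesis by (rule eq_matI) (use main Y in auto)
qed

lemma poly_lin_prod: "poly (\<Prod>a\<leftarrow>es. [:- a, 1:]) z = (\<Prod>a\<leftarrow>es. z - (a::complex))"
  by (induction es) (auto simp: algebra_simps)

lemma schur_ev:
  fixes M :: "complex mat"
  assumes M: "M \<in> carrier_mat m m" and ev: "\<And>k. eigenvalue M k \<Longrightarrow> Re k < 0"
  shows "\<exists>T P Q. similar_mat_wit M T P Q \<and> upper_triangular T \<and> T \<in> carrier_mat m m \<and>
     (\<forall>i<m. Re (T $$ (i,i)) < 0)"
proof -
  obtain es where cp: "char_poly M = (\<Prod>a\<leftarrow>es. [:- a, 1:])" and len: "length es = m"
    using char_poly_factorized[OF M] by blast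
  obtain T P Q where sd: "schur_decomposition M es = (T,P,Q)" by (cases "schur_decomposition M es") auto
  from schur_decomposition[OF M cp sd] have sim: "similar_mat_wit M T P Q" and ut: "upper_triangular T"
    and dg: "diag_mat T = es" by auto
  have T: "T \<in> carrier_mat m m" using similar_mat_witD2[OF M sim] by auto
  have "Re (T $$ (i,i)) < 0" if i: "i < m" for i
  proof -
    have "es ! i = T $$ (i,i)" unfolding dg[symmetric] diag_mat_def using i T by simp
    hence "T $$ (i,i) = es ! i" by simp
    hence mem: "T $$ (i,i) \<in> set es" using i len by simp
    have "poly (char_poly M) (T $$ (i,i)) = 0" unfolding cp poly_lin_prod
      using mem by (induction es) auto
    hence "eigenvalue M (T $$ (i,i))" using eigenvalue_root_char_poly[OF M] by simp
    thus ?thesis by (rule ev)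
  qed
  with sim ut T show ?thesis by blast
qed

lemma sylvester:
  fixes M1 M2 X :: "complex mat"
  assumes M1: "M1 \<in> carrier_mat m m" and M2: "M2 \<in> carrier_mat m m" and X: "X \<in> carrier_mat m m"
    and e1: "\<And>k. eigenvalue M1 k \<Longrightarrow> Re k < 0" and e2: "\<And>k. eigenvalue M2 k \<Longrightarrow> Re k < 0"
    and eq: "M1 * X + X * transpose_mat M2 = 0\<^sub>m m m"
  shows "X = 0\<^sub>m m m"
proof -
  obtain T1 P1 Q1 where s1: "similar_mat_wit M1 T1 P1 Q1" and u1: "upper_triangular T1" and T1: "T1 \<in> carrier_mat m m"
    and d1: "\<forall>i<m. Re (T1 $$ (i,i)) < 0" using schur_ev[OF M1 e1] by blast
  obtain T2 P2 Q2 where s2: "similar_mat_wit M2 T2 P2 Q2" and u2: "upper_triangular T2" and T2: "T2 \<in> carrier_mat m m"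
    and d2: "\<forall>i<m. Re (T2 $$ (i,i)) < 0" using schur_ev[OF M2 e2] by blast
  note w1 = similar_mat_witD2[OF M1 s1]
  note w2 = similar_mat_witD2[OF M2 s2]
  have P1: "P1 \<in> carrier_mat m m" and Q1: "Q1 \<in> carrier_mat m m" using w1 by auto
  have P2: "P2 \<in> carrier_mat m m" and Q2: "Q2 \<in> carrier_mat m m" using w2 by auto
  define Y where "Y = Q1 * X * transpose_mat Q2"
  have Yc: "Y \<in> carrier_mat m m" unfolding Y_def using Q1 X Q2 by auto
  have TQ1: "T1 * Q1 = Q1 * M1"
  proof -
    have "Q1 * M1 = Q1 * (P1 * T1 * Q1)" using w1 by simp
    also have "\<dots> = (Q1 * P1) * T1 * Q1" using P1 Q1 T1 by (simp add: assoc_mult_mat[of _ m m _ m _ m])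
    also have "\<dots> = T1 * Q1" using w1 T1 Q1 by simp
    finally show ?thesis by simp
  qed
  have M2T: "transpose_mat M2 = transpose_mat Q2 * transpose_mat T2 * transpose_mat P2"
  proof -
    have "transpose_mat M2 = transpose_mat (P2 * T2 * Q2)" using w2 by simp
    also have "\<dots> = transpose_mat Q2 * transpose_mat (P2 * T2)" by (rule transpose_mult) (use P2 T2 Q2 in auto)
    also have "transpose_mat (P2 * T2) = transpose_mat T2 * transpose_mat P2" by (rule transpose_mult) (use P2 T2 in auto)
    finally show ?thesis using P2 T2 Q2 by (simp add: assoc_mult_mat[of _ m m _ m _ m])
  qed
  have PQ2: "transpose_mat P2 * transpose_mat Q2 = 1\<^sub>m m"
  proof -
    have "transpose_mat P2 * transpose_mat Q2 = transpose_mat (Q2 * P2)" by (rule transpose_mult[symmetric]) (use P2 Q2 in auto)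
    thus ?thesis using w2 by simp
  qed
  have QP2: "transpose_mat Q2 * transpose_mat P2 = 1\<^sub>m m"
  proof -
    have "transpose_mat Q2 * transpose_mat P2 = transpose_mat (P2 * Q2)" by (rule transpose_mult[symmetric]) (use P2 Q2 in auto)
    thus ?thesis using w2 by simp
  qed
  have TQ2: "transpose_mat Q2 * transpose_mat T2 = transpose_mat M2 * transpose_mat Q2"
  proof -
    have "transpose_mat M2 * transpose_mat Q2 = transpose_mat Q2 * transpose_mat T2 * (transpose_mat P2 * transpose_mat Q2)"
      unfolding M2T using P2 T2 Q2 by (simp add: assoc_mult_mat[of _ m m _ m _ m])
    thus ?thesis unfolding PQ2 using Q2 T2 by simp
  qed
  have "T1 * Y + Y * transpose_mat T2 = Q1 * (M1 * X + X * transpose_mat M2) * transpose_mat Q2"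
  proof -
    have a: "T1 * Y = Q1 * (M1 * X) * transpose_mat Q2"
    proof -
      have "T1 * Y = (T1 * Q1) * X * transpose_mat Q2" unfolding Y_def using T1 Q1 X Q2
        by (simp add: assoc_mult_mat[of _ m m _ m _ m])
      also have "\<dots> = Q1 * (M1 * X) * transpose_mat Q2" unfolding TQ1 using Q1 M1 X Q2
        by (simp add: assoc_mult_mat[of _ m m _ m _ m])
      finally show ?thesis .
    qed
    have b: "Y * transpose_mat T2 = Q1 * (X * transpose_mat M2) * transpose_mat Q2"
    proof -
      have "Y * transpose_mat T2 = Q1 * X * (transpose_mat Q2 * transpose_mat T2)" unfolding Y_def using T2 Q1 X Q2
        by (simp add: assoc_mult_mat[of _ m m _ m _ m])
      also have "\<dots> = Q1 * (X * transpose_mat M2) * transpose_mat Q2" unfolding TQ2 using Q1 M2 X Q2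
        by (simp add: assoc_mult_mat[of _ m m _ m _ m])
      finally show ?thesis .
    qed
    have "Q1 * (M1 * X + X * transpose_mat M2) * transpose_mat Q2
      = (Q1 * (M1 * X) + Q1 * (X * transpose_mat M2)) * transpose_mat Q2"
      by (subst mult_add_distrib_mat[of _ m m]) (use Q1 M1 X M2 in auto)
    also have "\<dots> = Q1 * (M1 * X) * transpose_mat Q2 + Q1 * (X * transpose_mat M2) * transpose_mat Q2"
      by (rule add_mult_distrib_mat[of _ m m]) (use Q1 M1 X M2 Q2 in auto)
    finally show ?thesis unfolding a b by simp
  qed
  also have "\<dots> = 0\<^sub>m m m" unfolding eq using Q1 Q2 by simp
  finally have eqY: "T1 * Y + Y * transpose_mat T2 = 0\<^sub>m m m" .
  have "Y = 0\<^sub>m m m" by (rule tri_sylv[OF T1 T2 Yc u1 u2]) (use d1 d2 eqY in auto)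
  have "X = (P1 * Q1) * X * (transpose_mat Q2 * transpose_mat P2)" unfolding QP2 using w1 X by simp
  also have "\<dots> = P1 * Y * transpose_mat P2" unfolding Y_def using P1 Q1 X Q2 P2
    by (simp add: assoc_mult_mat[of _ m m _ m _ m])
  also have "\<dots> = 0\<^sub>m m m" unfolding \<open>Y = 0\<^sub>m m m\<close> using P1 P2 by simp
  finally show ?thesis .
qed

abbreviation cvec :: "real vec \<Rightarrow> complex vec" where "cvec \<equiv> map_vec complex_of_real"

definition hat :: "nat \<Rightarrow> real vec \<Rightarrow> complex vec" where "hat n u = dft_mat n *\<^sub>v cvec u"

lemma hat_carrier[simp]: "hat n u \<in> carrier_vec n" unfolding hat_def carrier_vec_def by simp

lemma Rm_mv[simp]: "v \<in> carrier_vec n \<Longrightarrow> Rm n f *\<^sub>v v \<in> carrier_vec n" unfolding carrier_vec_def by simp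

lemma mat_vec_zero: "A *\<^sub>v 0\<^sub>v m = 0\<^sub>v (dim_row A)" if "dim_col A = m"
  using that by (intro eq_vecI) (auto simp: scalar_prod_def)

lemma cscalar: assumes "u \<in> carrier_vec n" "w \<in> carrier_vec n"
  shows "complex_of_real (u \<bullet> w) = cvec u \<bullet> cvec w"
  using assms unfolding scalar_prod_def by (simp add: of_real_sum)

lemma VT_hat: assumes u: "u \<in> carrier_vec n"
  shows "transpose_mat (Vm n) *\<^sub>v cvec u = vec n (\<lambda>k. cnj (hat n u $ k))"
proof (rule eq_vecI)
  fix k assume "k < dim_vec (vec n (\<lambda>k. cnj (hat n u $ k)))"
  hence k: "k < n" by simp
  have "(transpose_mat (Vm n) *\<^sub>v cvec u) $ k = (\<Sum>i<n. Vm n $$ (i,k) * complex_of_real (u $ i))"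
    using k u by (simp add: scalar_prod_def lessThan_atLeast0)
  also have "\<dots> = (\<Sum>i<n. cnj (dft_mat n $$ (k,i) * complex_of_real (u $ i)))"
    by (rule sum.cong[OF refl]) (use k in \<open>simp add: Vm_def\<close>)
  also have "\<dots> = cnj (hat n u $ k)" unfolding hat_def using k u
    by (simp add: scalar_prod_def lessThan_atLeast0)
  finally show "(transpose_mat (Vm n) *\<^sub>v cvec u) $ k = vec n (\<lambda>k. cnj (hat n u $ k)) $ k" using k by simp
qed (use u in auto)

lemma QF: assumes n: "n > 0" and s: "symm n f" and u: "u \<in> carrier_vec n" and v: "v \<in> carrier_vec n"
  shows "complex_of_real (u \<bullet> (Rm n f *\<^sub>v v)) = (\<Sum>k<n. cnj (hat n u $ k) * complex_of_real (f k) * hat n v $ k)"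
proof -
  let ?D = "mat_diag n (\<lambda>k. complex_of_real (f k))"
  have "complex_of_real (u \<bullet> (Rm n f *\<^sub>v v)) = cvec u \<bullet> cvec (Rm n f *\<^sub>v v)"
    by (rule cscalar) (use u v in auto)
  also have "cvec (Rm n f *\<^sub>v v) = cmap (Rm n f) *\<^sub>v cvec v"
    by (rule of_real_hom.mult_mat_vec_hom[OF Rm_carrier v])
  also have "\<dots> = circ n f *\<^sub>v cvec v" unfolding cmap_Rm[OF s n] ..
  also have "\<dots> = Vm n *\<^sub>v (?D *\<^sub>v hat n v)" unfolding circ_def hat_def using v
    by (simp add: assoc_mult_mat_vec[of _ n n _ n])
  also have "cvec u \<bullet> (Vm n *\<^sub>v (?D *\<^sub>v hat n v)) = (transpose_mat (Vm n) *\<^sub>v cvec u) \<bullet> (?D *\<^sub>v hat n v)"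
    by (rule transpose_vec_mult_scalar[symmetric]) (use u in auto)
  also have "\<dots> = vec n (\<lambda>k. cnj (hat n u $ k)) \<bullet> (?D *\<^sub>v hat n v)" unfolding VT_hat[OF u] ..
  also have "\<dots> = (\<Sum>k<n. cnj (hat n u $ k) * (complex_of_real (f k) * hat n v $ k))"
    unfolding scalar_prod_def lessThan_atLeast0
  proof (rule sum.cong)
    fix k assume "k \<in> {0..<n}"
    hence k: "k < n" by simp
    show "vec n (\<lambda>k. cnj (hat n u $ k)) $ k * (?D *\<^sub>v hat n v) $ k = cnj (hat n u $ k) * (complex_of_real (f k) * hat n v $ k)"
      using k diag_mult_vec[OF k hat_carrier, of "\<lambda>k. complex_of_real (f k)" v] by simp
  qed simp
  finally show ?thesis by (simp add: mult.assoc)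
qed

lemma qf_pos:
  fixes s1 s2 s3 x y :: real
  assumes s1: "s1 > 0" and dt: "s1 * s3 - s2 * s2 > 0"
  shows "s1 * (x * x) + 2 * s2 * (x * y) + s3 * (y * y) \<ge> 0"
    and "x \<noteq> 0 \<or> y \<noteq> 0 \<Longrightarrow> s1 * (x * x) + 2 * s2 * (x * y) + s3 * (y * y) > 0"
proof -
  have id: "s1 * (s1 * (x * x) + 2 * s2 * (x * y) + s3 * (y * y)) = (s1 * x + s2 * y) * (s1 * x + s2 * y) + (s1 * s3 - s2 * s2) * (y * y)"
    by (simp add: algebra_simps)
  have "(s1 * x + s2 * y) * (s1 * x + s2 * y) + (s1 * s3 - s2 * s2) * (y * y) \<ge> 0"
    using dt by (intro add_nonneg_nonneg) auto
  hence "s1 * (s1 * (x * x) + 2 * s2 * (x * y) + s3 * (y * y)) \<ge> 0" unfolding id .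
  thus "s1 * (x * x) + 2 * s2 * (x * y) + s3 * (y * y) \<ge> 0" using s1 by (simp add: zero_le_mult_iff)
  assume nz: "x \<noteq> 0 \<or> y \<noteq> 0"
  show "s1 * (x * x) + 2 * s2 * (x * y) + s3 * (y * y) > 0"
  proof (cases "y = 0")
    case True
    with nz have "x \<noteq> 0" by simp
    hence "x * x > 0" by (cases "x > 0") (auto simp: mult_neg_neg)
    thus ?thesis using True s1 by simp
  next
    case False
    hence "y * y > 0" by (cases "y > 0") (auto simp: mult_neg_neg)
    hence "(s1 * s3 - s2 * s2) * (y * y) > 0" using dt by simp
    moreover have "(s1 * x + s2 * y) * (s1 * x + s2 * y) \<ge> 0" by simp
    ultimately have "s1 * (s1 * (x * x) + 2 * s2 * (x * y) + s3 * (y * y)) > 0" unfolding id by linarith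
    thus ?thesis using s1 by (simp add: zero_less_mult_iff)
  qed
qed

lemma mode_Re:
  fixes a b :: complex and s1 s2 s3 :: real
  shows "Re (cnj a * complex_of_real s1 * a + cnj a * complex_of_real s2 * b + cnj b * complex_of_real s2 * a + cnj b * complex_of_real s3 * b)
    = (s1 * (Re a * Re a) + 2 * s2 * (Re a * Re b) + s3 * (Re b * Re b)) + (s1 * (Im a * Im a) + 2 * s2 * (Im a * Im b) + s3 * (Im b * Im b))"
  by (simp add: algebra_simps)

lemma mode_pos:
  fixes a b :: complex and s1 s2 s3 :: real
  assumes s1: "s1 > 0" and dt: "s1 * s3 - s2 * s2 > 0"
  shows "Re (cnj a * complex_of_real s1 * a + cnj a * complex_of_real s2 * b + cnj b * complex_of_real s2 * a + cnj b * complex_of_real s3 * b) \<ge> 0"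
    and "a \<noteq> 0 \<or> b \<noteq> 0 \<Longrightarrow> Re (cnj a * complex_of_real s1 * a + cnj a * complex_of_real s2 * b + cnj b * complex_of_real s2 * a + cnj b * complex_of_real s3 * b) > 0"
proof -
  note q = qf_pos[OF s1 dt]
  show "Re (cnj a * complex_of_real s1 * a + cnj a * complex_of_real s2 * b + cnj b * complex_of_real s2 * a + cnj b * complex_of_real s3 * b) \<ge> 0"
    unfolding mode_Re using q(1)[of "Re a" "Re b"] q(1)[of "Im a" "Im b"] by linarith
  assume nz: "a \<noteq> 0 \<or> b \<noteq> 0"
  hence "(Re a \<noteq> 0 \<or> Re b \<noteq> 0) \<or> (Im a \<noteq> 0 \<or> Im b \<noteq> 0)" using complex_eqI by auto
  thus "Re (cnj a * complex_of_real s1 * a + cnj a * complex_of_real s2 * b + cnj b * complex_of_real s2 * a + cnj b * complex_of_real s3 * b) > 0"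
    unfolding mode_Re using q(1)[of "Re a" "Re b"] q(1)[of "Im a" "Im b"] q(2)[of "Re a" "Re b"] q(2)[of "Im a" "Im b"]
    by linarith
qed

lemma hat_nonzero: assumes n: "n > 0" and u: "u \<in> carrier_vec n" and nz: "u \<noteq> 0\<^sub>v n"
  shows "\<exists>k<n. hat n u $ k \<noteq> 0"
proof (rule ccontr)
  assume "\<not> ?thesis"
  hence "hat n u = 0\<^sub>v n" by (intro eq_vecI) auto
  hence "Vm n *\<^sub>v hat n u = 0\<^sub>v n" using mat_vec_zero[of "Vm n" n] by simp
  moreover have "Vm n *\<^sub>v hat n u = cvec u" unfolding hat_def using u
    by (simp add: assoc_mult_mat_vec[symmetric, of _ n n _ n] VU[OF n])
  ultimately have "cvec u = 0\<^sub>v n" by simp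
  hence "u = 0\<^sub>v n" by (intro eq_vecI) (use u in \<open>auto dest!: arg_cong[where f="\<lambda>w. w $ _"]\<close>)
  with nz show False by simp
qed

lemma hdet:
  fixes l1 l q d w P :: real
  assumes h1: "l1*l1*P = 2*l" and h2: "l*l*P - 2*d*l - w*P = 0" and h3: "q*w*P = 1" and P: "P > 0" and w: "w > 0"
  shows "(l1*q)*((l1*q)*(P*l - d)) - (l*q)*(l*q) > 0"
proof -
  have "P * ((l1*q)*((l1*q)*(P*l - d)) - (l*q)*(l*q)) = q*q*((l1*l1*P)*(P*l - d) - P*l*l)"
    by (simp add: algebra_simps)
  also have "\<dots> = q*q*(2*l*(P*l - d) - P*l*l)" unfolding h1 ..
  also have "\<dots> = q*q*(l*l*P - 2*d*l)" by (simp add: algebra_simps)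
  also have "l*l*P - 2*d*l = w*P" using h2 by simp
  finally have e: "P * ((l1*q)*((l1*q)*(P*l - d)) - (l*q)*(l*q)) = q*q*(w*P)" .
  have "q \<noteq> 0" using h3 by auto
  hence "q*q > 0" by (cases "q > 0") (auto simp: mult_neg_neg)
  hence "q*q*(w*P) > 0" using w P by simp
  hence "P * ((l1*q)*((l1*q)*(P*l - d)) - (l*q)*(l*q)) > 0" unfolding e .
  thus ?thesis using P by (simp add: zero_less_mult_iff)
qed

context
  fixes n :: nat and P1 P4 :: real
  assumes n: "n > 0" and P1: "P1 > 0" and P4: "P4 > 0"
begin

lemma mode_spd: "s1S n P1 P4 k > 0" "s1S n P1 P4 k * s3S n P1 P4 k - s2S n P1 P4 k * s2S n P1 P4 k > 0"
proof -
  note f = mode_facts[OF P1 P4, of n k]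
  have "qS n P1 P4 k > 0" unfolding qS_def using f(1) P4 by simp
  thus "s1S n P1 P4 k > 0" unfolding s1S_def using f(3) by simp
  show "s1S n P1 P4 k * s3S n P1 P4 k - s2S n P1 P4 k * s2S n P1 P4 k > 0"
    unfolding s3S_def s1S_def s2S_def by (rule hdet[OF f(4) f(5) f(6) P4 f(1)])
qed

lemma Ssol_spd: "sym_pos_def_mat (n+n) (Ssol n P1 P4)"
  unfolding sym_pos_def_mat_def
proof (intro conjI ballI impI)
  show "Ssol n P1 P4 \<in> carrier_mat (n+n) (n+n)" unfolding Ssol_def by simp
  show "transpose_mat (Ssol n P1 P4) = Ssol n P1 P4" unfolding Ssol_def Q_transpose ..
  fix x :: "real vec" assume x: "x \<in> carrier_vec (n+n)" and nz: "x \<noteq> 0\<^sub>v (n+n)"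
  let ?s1 = "s1S n P1 P4" and ?s2 = "s2S n P1 P4" and ?s3 = "s3S n P1 P4"
  define x1 where "x1 = vec n (\<lambda>i. x$i)"
  define x2 where "x2 = vec n (\<lambda>i. x$(n+i))"
  have xs: "x = x1 @\<^sub>v x2" unfolding x1_def x2_def by (rule vsplit[OF x])
  have c1: "x1 \<in> carrier_vec n" and c2: "x2 \<in> carrier_vec n" unfolding x1_def x2_def by auto
  have "Ssol n P1 P4 *\<^sub>v x = (Rm n ?s1 *\<^sub>v x1 + Rm n ?s2 *\<^sub>v x2) @\<^sub>v (Rm n ?s2 *\<^sub>v x1 + Rm n ?s3 *\<^sub>v x2)"
    unfolding Ssol_def Q_def xs by (rule four_block_mat_mult_vec[OF _ _ _ _ c1 c2]) auto
  hence "x \<bullet> (Ssol n P1 P4 *\<^sub>v x) = (x1 @\<^sub>v x2) \<bullet> ((Rm n ?s1 *\<^sub>v x1 + Rm n ?s2 *\<^sub>v x2) @\<^sub>v (Rm n ?s2 *\<^sub>v x1 + Rm n ?s3 *\<^sub>v x2))"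
    using xs by simp
  also have "\<dots> = x1 \<bullet> (Rm n ?s1 *\<^sub>v x1 + Rm n ?s2 *\<^sub>v x2) + x2 \<bullet> (Rm n ?s2 *\<^sub>v x1 + Rm n ?s3 *\<^sub>v x2)"
    by (rule scalar_prod_append[OF c1 c2]) (use c1 c2 in auto)
  also have "\<dots> = x1 \<bullet> (Rm n ?s1 *\<^sub>v x1) + x1 \<bullet> (Rm n ?s2 *\<^sub>v x2) + (x2 \<bullet> (Rm n ?s2 *\<^sub>v x1) + x2 \<bullet> (Rm n ?s3 *\<^sub>v x2))"
    using c1 c2 by (simp add: scalar_prod_add_distrib[of _ n])
  finally have e: "x \<bullet> (Ssol n P1 P4 *\<^sub>v x) = x1 \<bullet> (Rm n ?s1 *\<^sub>v x1) + x1 \<bullet> (Rm n ?s2 *\<^sub>v x2) + (x2 \<bullet> (Rm n ?s2 *\<^sub>v x1) + x2 \<bullet> (Rm n ?s3 *\<^sub>v x2))" .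
  define tm where "tm k = cnj (hat n x1 $ k) * complex_of_real (?s1 k) * hat n x1 $ k + cnj (hat n x1 $ k) * complex_of_real (?s2 k) * hat n x2 $ k
     + cnj (hat n x2 $ k) * complex_of_real (?s2 k) * hat n x1 $ k + cnj (hat n x2 $ k) * complex_of_real (?s3 k) * hat n x2 $ k" for k
  have "complex_of_real (x \<bullet> (Ssol n P1 P4 *\<^sub>v x)) = (\<Sum>k<n. tm k)"
    unfolding e of_real_add QF[OF n symm_s1S c1 c1] QF[OF n symm_s2S c1 c2] QF[OF n symm_s2S c2 c1] QF[OF n symm_s3S c2 c2]
      tm_def sum.distrib by (simp add: add.assoc)
  hence val: "x \<bullet> (Ssol n P1 P4 *\<^sub>v x) = (\<Sum>k<n. Re (tm k))"
    by (metis Re_complex_of_real Re_sum)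
  have "x1 \<noteq> 0\<^sub>v n \<or> x2 \<noteq> 0\<^sub>v n"
  proof (rule ccontr)
    assume "\<not> ?thesis"
    hence "x = 0\<^sub>v n @\<^sub>v 0\<^sub>v n" unfolding xs by simp
    also have "\<dots> = 0\<^sub>v (n+n)" by (rule eq_vecI) auto
    finally show False using nz by simp
  qed
  then obtain k where k: "k < n" and knz: "hat n x1 $ k \<noteq> 0 \<or> hat n x2 $ k \<noteq> 0"
    using hat_nonzero[OF n c1] hat_nonzero[OF n c2] by blast
  have "(\<Sum>k<n. (0::real)) < (\<Sum>k<n. Re (tm k))"
  proof (rule sum_strict_mono_ex1)
    show "\<forall>j\<in>{..<n}. 0 \<le> Re (tm j)" unfolding tm_def using mode_pos(1)[OF mode_spd] by blast
    show "\<exists>j\<in>{..<n}. 0 < Re (tm j)" using k knz unfolding tm_def using mode_pos(2)[OF mode_spd] by blast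
  qed simp
  thus "x \<bullet> (Ssol n P1 P4 *\<^sub>v x) > 0" unfolding val by simp
qed

lemma closed_loop:
  "sysA n - Ssol n P1 P4 * transpose_mat (sysC n P4) * weightW n P1 * sysC n P4
    = Q n (\<lambda>k. 0 - l1S n P1 P4 k * P4) (\<lambda>k. 1 - 0) (\<lambda>k. Dhat n k - lS n P1 P4 k * P4) (\<lambda>k. 0 - 0)"
  unfolding LC_formula[OF n P1 P4] sysA_Q[OF n] Q_minus ..

lemma hurwitz_ours: "hurwitz (sysA n - Ssol n P1 P4 * transpose_mat (sysC n P4) * weightW n P1 * sysC n P4)"
  unfolding hurwitz_def closed_loop
proof (intro allI impI)
  fix z assume "eigenvalue (cmap (Q n (\<lambda>k. 0 - l1S n P1 P4 k * P4) (\<lambda>k. 1 - 0) (\<lambda>k. Dhat n k - lS n P1 P4 k * P4) (\<lambda>k. 0 - 0))) z"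
  from eig_Q[OF n symm_minus[OF symm_const symm_mult[OF symm_l1S symm_const]] symm_const
     symm_minus[OF symm_Dhat symm_mult[OF symm_lS symm_const]] symm_const this] obtain k where k: "k < n" and
    e: "(complex_of_real (0 - l1S n P1 P4 k * P4) - z) * (complex_of_real (0 - 0) - z)
        - complex_of_real (1 - 0) * complex_of_real (Dhat n k - lS n P1 P4 k * P4) = 0"
    by auto
  note f = mode_facts[OF P1 P4, of n k]
  have "z * z + complex_of_real (l1S n P1 P4 k * P4) * z + complex_of_real (lS n P1 P4 k * P4 - Dhat n k)
     = (complex_of_real (0 - l1S n P1 P4 k * P4) - z) * (complex_of_real (0 - 0) - z)
        - complex_of_real (1 - 0) * complex_of_real (Dhat n k - lS n P1 P4 k * P4)"
    by (simp add: algebra_simps)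
  hence e': "z * z + complex_of_real (l1S n P1 P4 k * P4) * z + complex_of_real (lS n P1 P4 k * P4 - Dhat n k) = 0"
    using e by simp
  show "Re z < 0"
    by (rule quad_re[OF _ _ e']) (use f(3) f(7) P4 in \<open>simp_all add: mult.commute\<close>)
qed

end

lemma cmap_add: "P \<in> carrier_mat N M \<Longrightarrow> P2 \<in> carrier_mat N M \<Longrightarrow> cmap (P + P2) = cmap P + cmap P2"
  by (rule eq_matI) auto

lemma cmap_zero: "cmap (0\<^sub>m N M) = 0\<^sub>m N M" by (rule eq_matI) auto

lemma riccati_unique:
  fixes A B C W S1 S2 :: "real mat"
  assumes A: "A \<in> carrier_mat N N" and B: "B \<in> carrier_mat N mb" and C: "C \<in> carrier_mat p N"
    and W: "W \<in> carrier_mat p p" and WT: "transpose_mat W = W"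
    and s1: "stabilizing_riccati_sol A B C W S1" and s2: "stabilizing_riccati_sol A B C W S2"
  shows "S1 = S2"
proof -
  have dA: "dim_row A = N" using A by auto
  from s1 have S1: "S1 \<in> carrier_mat N N" and S1T: "transpose_mat S1 = S1"
    and R1: "A * S1 + S1 * transpose_mat A + B * transpose_mat B - S1 * transpose_mat C * W * C * S1 = 0\<^sub>m N N"
    and H1: "hurwitz (A - S1 * transpose_mat C * W * C)"
    unfolding stabilizing_riccati_sol_def sym_pos_def_mat_def dA by auto
  from s2 have S2: "S2 \<in> carrier_mat N N" and S2T: "transpose_mat S2 = S2"
    and R2: "A * S2 + S2 * transpose_mat A + B * transpose_mat B - S2 * transpose_mat C * W * C * S2 = 0\<^sub>m N N"
    and H2: "hurwitz (A - S2 * transpose_mat C * W * C)"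
    unfolding stabilizing_riccati_sol_def sym_pos_def_mat_def dA by auto
  define G where "G = transpose_mat C * W * C"
  have CT: "transpose_mat C \<in> carrier_mat N p" using C by simp
  have G: "G \<in> carrier_mat N N" unfolding G_def using C W by auto
  have GT: "transpose_mat G = G"
  proof -
    have "transpose_mat G = transpose_mat C * transpose_mat (transpose_mat C * W)"
      unfolding G_def by (rule transpose_mult) (use C W in auto)
    also have "transpose_mat (transpose_mat C * W) = transpose_mat W * C"
      by (subst transpose_mult[of _ N p _ p]) (use C W in auto)
    also have "transpose_mat C * (transpose_mat W * C) = G" unfolding WT G_def
      by (rule assoc_mult_mat[symmetric]) (use C W in auto)
    finally show ?thesis .
  qed
  have SG: "S * transpose_mat C * W * C = S * G" if S: "S \<in> carrier_mat N N" for S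
  proof -
    have "S * transpose_mat C * W * C = S * (transpose_mat C * W) * C"
      by (subst assoc_mult_mat[of S N N _ p W p]) (use S C W in auto)
    also have "\<dots> = S * G" unfolding G_def
      by (rule assoc_mult_mat) (use S C W in auto)
    finally show ?thesis .
  qed
  define BB where "BB = B * transpose_mat B"
  have BB: "BB \<in> carrier_mat N N" unfolding BB_def using B by auto
  have AT: "transpose_mat A \<in> carrier_mat N N" using A by simp
  have R1': "A * S1 + S1 * transpose_mat A + BB - S1 * G * S1 = 0\<^sub>m N N" using R1 unfolding SG[OF S1] BB_def .
  have R2': "A * S2 + S2 * transpose_mat A + BB - S2 * G * S2 = 0\<^sub>m N N" using R2 unfolding SG[OF S2] BB_def .
  have T2: "transpose_mat (A - S2 * G) = transpose_mat A - G * S2"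
  proof -
    have "transpose_mat (A - S2 * G) = transpose_mat A - transpose_mat (S2 * G)"
      by (rule transpose_minus) (use A S2 G in auto)
    also have "transpose_mat (S2 * G) = G * S2"
      using transpose_mult[OF S2 G] GT S2T by simp
    finally show ?thesis .
  qed
  have d1: "(A - S1 * G) * (S1 - S2) = (A * S1 - S1 * G * S1) - (A * S2 - S1 * G * S2)"
  proof -
    have "(A - S1 * G) * (S1 - S2) = (A - S1 * G) * S1 - (A - S1 * G) * S2"
      by (rule mult_minus_distrib_mat[of _ N N]) (use A S1 S2 G in auto)
    also have "(A - S1 * G) * S1 = A * S1 - S1 * G * S1"
      by (rule minus_mult_distrib_mat[of _ N N]) (use A S1 S2 G in auto)
    also have "(A - S1 * G) * S2 = A * S2 - S1 * G * S2"
      by (rule minus_mult_distrib_mat[of _ N N]) (use A S1 S2 G in auto)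
    finally show ?thesis .
  qed
  have d2: "(S1 - S2) * (transpose_mat A - G * S2) = (S1 * transpose_mat A - S1 * G * S2) - (S2 * transpose_mat A - S2 * G * S2)"
  proof -
    have "(S1 - S2) * (transpose_mat A - G * S2) = S1 * (transpose_mat A - G * S2) - S2 * (transpose_mat A - G * S2)"
      by (rule minus_mult_distrib_mat[of _ N N]) (use AT S1 S2 G in auto)
    also have "S1 * (transpose_mat A - G * S2) = S1 * transpose_mat A - S1 * (G * S2)"
      by (rule mult_minus_distrib_mat[of _ N N]) (use AT S1 S2 G in auto)
    also have "S2 * (transpose_mat A - G * S2) = S2 * transpose_mat A - S2 * (G * S2)"
      by (rule mult_minus_distrib_mat[of _ N N]) (use AT S1 S2 G in auto)
    also have "S1 * (G * S2) = S1 * G * S2" by (rule assoc_mult_mat[symmetric]) (use S1 S2 G in auto)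
    also have "S2 * (G * S2) = S2 * G * S2" by (rule assoc_mult_mat[symmetric]) (use S1 S2 G in auto)
    finally show ?thesis .
  qed
  have key: "(A - S1 * G) * (S1 - S2) + (S1 - S2) * transpose_mat (A - S2 * G) = 0\<^sub>m N N"
    unfolding T2 d1 d2
  proof (rule eq_matI)
    fix i j assume i: "i < dim_row (0\<^sub>m N N :: real mat)" and j: "j < dim_col (0\<^sub>m N N :: real mat)"
    hence i: "i < N" and j: "j < N" by auto
    have e1: "(A * S1 + S1 * transpose_mat A + BB - S1 * G * S1) $$ (i,j) = 0" using R1' i j by simp
    have e2: "(A * S2 + S2 * transpose_mat A + BB - S2 * G * S2) $$ (i,j) = 0" using R2' i j by simp
    show "(A * S1 - S1 * G * S1 - (A * S2 - S1 * G * S2) +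
          (S1 * transpose_mat A - S1 * G * S2 - (S2 * transpose_mat A - S2 * G * S2))) $$ (i, j) =
         0\<^sub>m N N $$ (i, j)"
      using e1 e2 i j A S1 S2 G BB by simp
  qed (use A S1 S2 in auto)
  define M1 where "M1 = cmap (A - S1 * G)"
  define M2 where "M2 = cmap (A - S2 * G)"
  define X where "X = cmap (S1 - S2)"
  have cM1: "M1 \<in> carrier_mat N N" and cM2: "M2 \<in> carrier_mat N N" and cX: "X \<in> carrier_mat N N"
    unfolding M1_def M2_def X_def using A S1 S2 G by auto
  have "M1 * X + X * transpose_mat M2 = cmap ((A - S1 * G) * (S1 - S2) + (S1 - S2) * transpose_mat (A - S2 * G))"
    unfolding M1_def M2_def X_def map_mat_transpose
    by (subst cmap_add[of _ N N], use A S1 S2 G in auto, subst cmap_mult[of _ N N], auto, subst cmap_mult[of _ N N], auto)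
  also have "\<dots> = 0\<^sub>m N N" unfolding key cmap_zero ..
  finally have "M1 * X + X * transpose_mat M2 = 0\<^sub>m N N" .
  moreover have "\<And>k. eigenvalue M1 k \<Longrightarrow> Re k < 0" using H1 unfolding hurwitz_def M1_def SG[OF S1] by blast
  moreover have "\<And>k. eigenvalue M2 k \<Longrightarrow> Re k < 0" using H2 unfolding hurwitz_def M2_def SG[OF S2] by blast
  ultimately have "X = 0\<^sub>m N N" using sylvester[OF cM1 cM2 cX] by blast
  hence "S1 - S2 = 0\<^sub>m N N" unfolding X_def using cmap_zero cmap_inj by metis
  show "S1 = S2"
  proof (rule eq_matI)
    fix i j assume "i < dim_row S2" "j < dim_col S2"
    hence "(S1 - S2) $$ (i,j) = 0" using \<open>S1 - S2 = 0\<^sub>m N N\<close> S2 by simp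
    thus "S1 $$ (i,j) = S2 $$ (i,j)" using \<open>i < dim_row S2\<close> \<open>j < dim_col S2\<close> by simp
  qed (use S1 S2 in auto)
qed

lemma Vm_inverse: assumes n: "n > 0" shows "the (mat_inverse (dft_mat n)) = Vm n"
proof (cases "mat_inverse (dft_mat n)")
  case None
  from mat_inverse(1)[OF dft_carrier None]
  have "dft_mat n \<notin> Units (ring_mat TYPE(complex) n ())" .
  moreover have "dft_mat n \<in> Units (ring_mat TYPE(complex) n ())"
    unfolding Units_def ring_mat_def using UV[OF n] VU[OF n] by auto
  ultimately show ?thesis by simp
next
  case (Some B)
  from mat_inverse(2)[OF dft_carrier Some] have B: "dft_mat n * B = 1\<^sub>m n" "B \<in> carrier_mat n n" by auto
  have "B = (Vm n * dft_mat n) * B" unfolding VU[OF n] using B by simp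
  also have "\<dots> = Vm n * (dft_mat n * B)" by (rule assoc_mult_mat) (use B in auto)
  also have "\<dots> = Vm n" unfolding B(1) by simp
  finally show ?thesis using Some by simp
qed

lemma circ_of_symbol_circ: assumes n: "n > 0" shows "circ_of_symbol n f = circ n f"
  unfolding circ_of_symbol_def circ_def Vm_inverse[OF n] ..

lemma cmap_St: assumes n: "n > 0" and s: "symm n a" "symm n b"
  shows "cmap (St n a b) = circ n a @\<^sub>r circ n b"
  unfolding St_def append_rows_def
  by (subst map_four_block_mat[of _ n n _ 0 _ n]) (auto simp: cmap_Rm[OF _ n] s cmap_zero)

theorem lemma4:
  fixes n :: nat and P1 P4 :: real
  assumes "n \<ge> 2" and "P1 > 0" and "P4 > 0"
  shows "\<exists>L. kalman_gain (sysA n) (sysB n) (sysC n P4) (weightW n P1) L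
           \<and> (\<forall>L'. kalman_gain (sysA n) (sysB n) (sysC n P4) (weightW n P1) L' \<longrightarrow> L' = L)
           \<and> map_mat complex_of_real L =
               circ_of_symbol n (\<lambda>\<kappa>. sqrt (2 / P4 * L0hat n P1 P4 \<kappa>))
               @\<^sub>r circ_of_symbol n (L0hat n P1 P4)"
proof -
  have n: "n > 0" using assms(1) by simp
  note P1 = assms(2) and P4 = assms(3)
  define L where "L = Ssol n P1 P4 * transpose_mat (sysC n P4) * weightW n P1"
  have dA: "dim_row (sysA n) = n + n" unfolding sysA_Q[OF n] by simp
  have sol: "stabilizing_riccati_sol (sysA n) (sysB n) (sysC n P4) (weightW n P1) (Ssol n P1 P4)"
    unfolding stabilizing_riccati_sol_def dA
    using Ssol_spd[OF n P1 P4] riccati[OF n P1 P4] hurwitz_ours[OF n P1 P4] unfolding dA by blast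
  have kg: "kalman_gain (sysA n) (sysB n) (sysC n P4) (weightW n P1) L"
    unfolding kalman_gain_def L_def using sol by blast
  have Ac: "sysA n \<in> carrier_mat (n+n) (n+n)" unfolding sysA_Q[OF n] by simp
  have Bc: "sysB n \<in> carrier_mat (n+n) n" unfolding sysB_St[OF n] by simp
  have Cc: "sysC n P4 \<in> carrier_mat n (n+n)" unfolding sysC_def
    using four_block_carrier_mat[of "P4 \<cdot>\<^sub>m 1\<^sub>m n" n n "0\<^sub>m 0 n :: real mat" 0 n "0\<^sub>m n n" "0\<^sub>m 0 n"] by simp
  have Wc: "weightW n P1 \<in> carrier_mat n n" unfolding W_Rm[OF n] by simp
  have WT: "transpose_mat (weightW n P1) = weightW n P1" unfolding W_Rm[OF n] Rm_transpose ..
  have uniq: "L' = L" if "kalman_gain (sysA n) (sysB n) (sysC n P4) (weightW n P1) L'" for L'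
  proof -
    from that obtain S' where s': "stabilizing_riccati_sol (sysA n) (sysB n) (sysC n P4) (weightW n P1) S'"
      and L': "L' = S' * transpose_mat (sysC n P4) * weightW n P1" unfolding kalman_gain_def by blast
    have "S' = Ssol n P1 P4" by (rule riccati_unique[OF Ac Bc Cc Wc WT s' sol])
    thus ?thesis unfolding L' L_def by simp
  qed
  have "map_mat complex_of_real L = circ n (l1S n P1 P4) @\<^sub>r circ n (lS n P1 P4)"
    unfolding L_def gain_formula[OF n P1 P4] by (rule cmap_St[OF n symm_l1S symm_lS])
  also have "circ n (l1S n P1 P4) = circ_of_symbol n (\<lambda>\<kappa>. sqrt (2 / P4 * L0hat n P1 P4 \<kappa>))"
    unfolding circ_of_symbol_circ[OF n] l1S_def ..
  also have "circ n (lS n P1 P4) = circ_of_symbol n (L0hat n P1 P4)"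
    unfolding circ_of_symbol_circ[OF n] lS_def ..
  finally show ?thesis using kg uniq by blast
qed

end
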